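(* Let $n\geq 8$ be even and $r=n/2$. Let $V=\{v_0,\dots,v_r\}\sqcup\{w_2,\dots,w_r\}$ (so $|V|=n$) and consider the labelled graph on $V$ with edges $\{v_k,v_{k+1}\}$ with label $k$ for $0\leq k\leq r-1$, edges $\{w_k,w_{k+1}\}$ with label $k$ for $2\leq k\leq r-1$, and the edge $\{v_r,w_r\}$ with label $r-2$. Then $G=\mathrm{Sym}(V)\cong S_n$ and $(G,(\rho_0,\dots,\rho_{r-1}))$ is a string C-group.
   Context: A string group generated by involutions (sggi) of rank $r$ is a pair $(G,(\rho_0,\dots,\rho_{r-1}))$ where $\rho_0,\dots,\rho_{r-1}$ are involutions generating the group $G$ such that $(\rho_i\rho_j)^2=1$ whenever $|i-j|\geq 2$. It is a string C-group if in addition it satisfies the intersection property: for all $J,K\subseteq\{0,\dots,r-1\}$, $\langle \rho_j : j\in J\rangle\cap\langle\rho_k : k\in K\rangle=\langle \rho_j : j\in J\cap K\rangle$. Labelled-graph convention: the vertex set $V$ is finite, and each edge $\{a,b\}$ ($a\neq b$) carries one or more labels from $\{0,\dots,r-1\}$, the edges carrying any given label being pairwise disjoint; $\rho_k$ denotes the permutation of $V$ equal to the product of the transpositions $(a\,b)$ over all edges $\{a,b\}$ carrying label $k$, and $G=\langle\rho_0,\dots,\rho_{r-1}\rangle\leq \mathrm{Sym}(V)$. *)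

theory Defs
  imports "HOL-Algebra.Algebra"
begin

definition sggi :: "('g, 'b) monoid_scheme \<Rightarrow> nat \<Rightarrow> (nat \<Rightarrow> 'g) \<Rightarrow> bool" where
  "sggi G r rho \<longleftrightarrow> group G
     \<and> (\<forall>i<r. rho i \<in> carrier G \<and> rho i \<noteq> \<one>\<^bsub>G\<^esub> \<and> rho i \<otimes>\<^bsub>G\<^esub> rho i = \<one>\<^bsub>G\<^esub>)
     \<and> generate G (rho ` {..<r}) = carrier G
     \<and> (\<forall>i<r. \<forall>j<r. (i + 2 \<le> j \<or> j + 2 \<le> i) \<longrightarrow>
            (rho i \<otimes>\<^bsub>G\<^esub> rho j) [^]\<^bsub>G\<^esub> (2::nat) = \<one>\<^bsub>G\<^esub>)"

definition string_C_group :: "('g, 'b) monoid_scheme \<Rightarrow> nat \<Rightarrow> (nat \<Rightarrow> 'g) \<Rightarrow> bool" where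
  "string_C_group G r rho \<longleftrightarrow> sggi G r rho
     \<and> (\<forall>J K. J \<subseteq> {..<r} \<longrightarrow> K \<subseteq> {..<r} \<longrightarrow>
          generate G (rho ` J) \<inter> generate G (rho ` K) = generate G (rho ` (J \<inter> K)))"

text \<open>Labelled graphs: a set of pairs (edge, label), each edge a 2-element set.
The permutation of label k is the product of the transpositions of the edges
with label k (these edges are pairwise disjoint), i.e. it swaps the two ends of
each such edge and fixes every other point.\<close>

definition edge_perm :: "('a set \<times> nat) set \<Rightarrow> nat \<Rightarrow> 'a \<Rightarrow> 'a" where
  "edge_perm L k x =
     (if \<exists>y. y \<noteq> x \<and> ({x, y}, k) \<in> L then (THE y. y \<noteq> x \<and> ({x, y}, k) \<in> L) else x)"

text \<open>The concrete graph: v_i = Inl i (0 \<le> i \<le> r), w_i = Inr i (2 \<le> i \<le> r).\<close>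

definition vertsP :: "nat \<Rightarrow> (nat + nat) set" where
  "vertsP r = Inl ` {0..r} \<union> Inr ` {2..r}"

definition edgesP :: "nat \<Rightarrow> ((nat + nat) set \<times> nat) set" where
  "edgesP r = {({Inl k, Inl (k + 1)}, k) | k. k \<le> r - 1}
            \<union> {({Inr k, Inr (k + 1)}, k) | k. 2 \<le> k \<and> k \<le> r - 1}
            \<union> {({Inl r, Inr r}, r - 2)}"

text \<open>The generators as elements of the group BijGroup (vertsP r) of all
permutations of the vertex set (extensional functions on vertsP r).\<close>

definition rhoP :: "nat \<Rightarrow> nat \<Rightarrow> (nat + nat) \<Rightarrow> (nat + nat)" where
  "rhoP r k = restrict (edge_perm (edgesP r) k) (vertsP r)"

end

theory Submission
  imports Defs
begin

abbreviation finv :: "('a \<Rightarrow> 'a) \<Rightarrow> 'a \<Rightarrow> 'a" where "finv f \<equiv> Hilbert_Choice.inv f"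

inductive_set gen :: "('a \<Rightarrow> 'a) set \<Rightarrow> ('a \<Rightarrow> 'a) set" for S where
  gid: "id \<in> gen S"
| gstep: "s \<in> S \<Longrightarrow> g \<in> gen S \<Longrightarrow> s \<circ> g \<in> gen S"

lemma gen_incl: "s \<in> S \<Longrightarrow> s \<in> gen S"
  using gstep[OF _ gid] by fastforce

lemma gen_comp: "f \<in> gen S \<Longrightarrow> g \<in> gen S \<Longrightarrow> f \<circ> g \<in> gen S"
proof (induction f rule: gen.induct)
  case gid then show ?case by simp
next
  case (gstep s f) then show ?case by (metis gen.gstep o_assoc)
qed

lemma gen_mono':
  assumes "S \<subseteq> T" "g \<in> gen S" shows "g \<in> gen T"
  using assms(2)
proof induction
  case gid show ?case by (rule gen.gid)
next
  case (gstep s g) then show ?case using assms(1) by (blast intro: gen.gstep)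
qed

lemma gen_mono: "S \<subseteq> T \<Longrightarrow> gen S \<subseteq> gen T"
  using gen_mono' by blast

lemma gen_inv_ex:
  assumes inv: "\<And>s. s \<in> S \<Longrightarrow> s \<circ> s = id" and g: "g \<in> gen S"
  shows "\<exists>h\<in>gen S. h \<circ> g = id \<and> g \<circ> h = id"
  using g
proof (induction g rule: gen.induct)
  case gid then show ?case by (intro bexI[of _ id] conjI) (auto intro: gen.gid)
next
  case (gstep s g)
  then obtain h where h: "h \<in> gen S" "h \<circ> g = id" "g \<circ> h = id" by blast
  have "h \<circ> s \<in> gen S" using gen_comp[OF h(1) gen_incl[OF gstep(1)]] .
  moreover have "(h \<circ> s) \<circ> (s \<circ> g) = id"
    by (metis h(2) inv[OF gstep(1)] comp_id o_assoc)
  moreover have "(s \<circ> g) \<circ> (h \<circ> s) = id"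
    by (metis h(3) inv[OF gstep(1)] comp_id o_assoc)
  ultimately show ?case by blast
qed

lemma gen_bij:
  assumes "\<And>s. s \<in> S \<Longrightarrow> s \<circ> s = id" "g \<in> gen S"
  shows "bij g"
  using gen_inv_ex[OF assms] by (metis o_bij)

lemma gen_inv:
  assumes "\<And>s. s \<in> S \<Longrightarrow> s \<circ> s = id" "g \<in> gen S"
  shows "finv g \<in> gen S" "finv g \<circ> g = id" "g \<circ> finv g = id"
proof -
  obtain h where h: "h \<in> gen S" "h \<circ> g = id" "g \<circ> h = id" using gen_inv_ex[OF assms] by blast
  have "finv g = h" using h inv_unique_comp by blast
  then show "finv g \<in> gen S" "finv g \<circ> g = id" "g \<circ> finv g = id" using h by auto
qed

lemma gen_fix:
  assumes "\<And>s. s \<in> S \<Longrightarrow> s p = p" "g \<in> gen S" shows "g p = p"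
  using assms(2) by (induction g rule: gen.induct) (auto simp: assms(1))

lemma gen_pres:
  assumes "\<And>s x. s \<in> S \<Longrightarrow> x \<in> A \<Longrightarrow> s x \<in> A" "g \<in> gen S" "x \<in> A" shows "g x \<in> A"
  using assms(2,3) by (induction g arbitrary: x rule: gen.induct) (auto simp: assms(1))

lemma gen_commute:
  assumes "\<And>s. s \<in> S \<Longrightarrow> s \<circ> t = t \<circ> s" "g \<in> gen S" shows "g \<circ> t = t \<circ> g"
  using assms(2)
proof (induction g rule: gen.induct)
  case gid then show ?case by simp
next
  case (gstep s g) then show ?case by (metis assms(1) o_assoc)
qed

lemma gen_commute2:
  assumes "\<And>s t. s \<in> S \<Longrightarrow> t \<in> T \<Longrightarrow> s \<circ> t = t \<circ> s" "g \<in> gen S" "h \<in> gen T"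
  shows "g \<circ> h = h \<circ> g"
proof -
  have "\<And>t. t \<in> T \<Longrightarrow> g \<circ> t = t \<circ> g" using gen_commute assms by metis
  then have "h \<circ> g = g \<circ> h" using gen_commute[OF _ assms(3)] by metis
  then show ?thesis by simp
qed

lemma gen_permutes:
  assumes "\<And>s. s \<in> S \<Longrightarrow> s permutes V" "g \<in> gen S" shows "g permutes V"
  using assms(2)
proof induction
  case gid show ?case by (rule permutes_id)
next
  case (gstep s g) then show ?case using assms(1) permutes_compose by blast
qed

lemma gen_single:
  assumes "s \<circ> s = id" "g \<in> gen {s}" shows "g = id \<or> g = s"
  using assms(2)
proof induction
  case gid show ?case by simp
next
  case (gstep s' g)
  then have "s' = s" by simp
  with gstep(3) show ?case using assms(1) by (metis comp_id)
qed

section \<open>Abstract intersection property reduction\<close>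

lemma cancel_l: "h \<circ> g = id \<Longrightarrow> x = g \<circ> y \<Longrightarrow> y = h \<circ> x"
proof -
  assume "h \<circ> g = id" "x = g \<circ> y"
  then have "h \<circ> x = (h \<circ> g) \<circ> y" by (simp add: o_assoc)
  then show ?thesis using \<open>h \<circ> g = id\<close> by simp
qed

lemma cancel_r: "g \<circ> h = id \<Longrightarrow> x = y \<circ> g \<Longrightarrow> y = x \<circ> h"
proof -
  assume "g \<circ> h = id" "x = y \<circ> g"
  then have "x \<circ> h = y \<circ> (g \<circ> h)" by (simp add: comp_assoc)
  then show ?thesis using \<open>g \<circ> h = id\<close> by simp
qed

lemma swap_eq: assumes "h \<circ> c = id" "b \<circ> k = id" "c \<circ> d = a \<circ> b" shows "h \<circ> a = d \<circ> k"
proof -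
  have "h \<circ> a = h \<circ> a \<circ> (b \<circ> k)" using assms(2) by simp
  also have "\<dots> = h \<circ> (a \<circ> b) \<circ> k" by (simp add: o_assoc)
  also have "\<dots> = h \<circ> (c \<circ> d) \<circ> k" using assms(3) by simp
  also have "\<dots> = (h \<circ> c) \<circ> d \<circ> k" by (simp add: o_assoc)
  also have "\<dots> = d \<circ> k" using assms(1) by simp
  finally show ?thesis .
qed

locale invfam =
  fixes e :: "nat \<Rightarrow> 'a \<Rightarrow> 'a"
  assumes einv: "\<And>i. e i \<circ> e i = id"
    and ecomm: "\<And>i j. i + 2 \<le> j \<Longrightarrow> e i \<circ> e j = e j \<circ> e i"
begin

abbreviation G :: "nat set \<Rightarrow> ('a \<Rightarrow> 'a) set" where "G J \<equiv> gen (e ` J)"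

lemma inv_in: "g \<in> G J \<Longrightarrow> finv g \<in> G J" and inv_l: "g \<in> G J \<Longrightarrow> finv g \<circ> g = id"
  and inv_r: "g \<in> G J \<Longrightarrow> g \<circ> finv g = id"
  using gen_inv[of "e ` J" g] einv by auto

lemma Gmono: "I \<subseteq> J \<Longrightarrow> G I \<subseteq> G J"
  by (simp add: gen_mono image_mono)

lemma Gcomp: "f \<in> G J \<Longrightarrow> g \<in> G J \<Longrightarrow> f \<circ> g \<in> G J" by (rule gen_comp)

lemma Gcomm: assumes "\<And>i j. i \<in> I \<Longrightarrow> j \<in> K \<Longrightarrow> i + 2 \<le> j"
  "a \<in> G I" "b \<in> G K" shows "a \<circ> b = b \<circ> a"
  using gen_commute2[OF _ assms(2,3)] assms(1) ecomm by blast

lemma Gdec: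
  assumes "\<And>i j. i \<in> I \<Longrightarrow> j \<in> K \<Longrightarrow> i + 2 \<le> j" "x \<in> G (I \<union> K)"
  shows "\<exists>a\<in>G I. \<exists>b\<in>G K. x = a \<circ> b"
  using assms(2)
proof (induction x rule: gen.induct)
  case gid then show ?case by (metis gen.gid id_comp)
next
  case (gstep s g)
  then obtain a b where ab: "a \<in> G I" "b \<in> G K" "g = a \<circ> b" by blast
  from gstep(1) obtain i where i: "i \<in> I \<union> K" "s = e i" by blast
  show ?case
  proof (cases "i \<in> I")
    case True
    then have "s \<circ> a \<in> G I" using gen.gstep ab i by blast
    then show ?thesis using ab by (metis o_assoc)
  next
    case False
    then have iK: "i \<in> K" using i by blast
    have "s \<circ> b \<in> G K" using gen.gstep ab i iK by blast
    moreover have "s \<circ> a = a \<circ> s"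
      using Gcomm[OF assms(1) ab(1) gen_incl[of s "e ` K"]] i iK by auto
    ultimately show ?thesis using ab by (metis o_assoc)
  qed
qed

lemma block_exists:
  fixes I :: "nat set"
  assumes "m \<in> I" "I \<subseteq> {..m}"
  shows "\<exists>k\<le>m. {k..m} \<subseteq> I \<and> (\<forall>i\<in>I. i < k \<longrightarrow> i + 2 \<le> k)"
proof -
  define k where "k = (LEAST k. {k..m} \<subseteq> I)"
  have P: "{m..m} \<subseteq> I" using assms by auto
  have k1: "{k..m} \<subseteq> I" unfolding k_def by (rule LeastI[of "\<lambda>k. {k..m} \<subseteq> I", OF P])
  have k2: "k \<le> m" unfolding k_def by (rule Least_le[of "\<lambda>k. {k..m} \<subseteq> I", OF P])
  have "i + 2 \<le> k" if "i \<in> I" "i < k" for i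
  proof (rule ccontr)
    assume "\<not> i + 2 \<le> k"
    then have "k = Suc i" using that by auto
    then have "{i..m} \<subseteq> insert i {k..m}" by auto
    then have "{i..m} \<subseteq> I" using k1 that by blast
    then have "k \<le> i" unfolding k_def by (rule Least_le)
    then show False using that by auto
  qed
  then show ?thesis using k1 k2 by blast
qed

lemma split_block:
  fixes I :: "nat set"
  assumes "{k..m} \<subseteq> I" "I \<subseteq> {..m}" "\<forall>i\<in>I. i < k \<longrightarrow> i + 2 \<le> k" "k \<le> m"
  shows "I = (I - {k..m}) \<union> {k..m}" "\<And>i j. i \<in> I - {k..m} \<Longrightarrow> j \<in> {k..m} \<Longrightarrow> i + 2 \<le> j"
    "I - {k..m} \<subseteq> {..<m}" "I - {k..m} \<subseteq> {..<k}"
proof -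
  show "I = (I - {k..m}) \<union> {k..m}" using assms(1) by blast
  show sub: "I - {k..m} \<subseteq> {..<k}"
  proof
    fix i assume "i \<in> I - {k..m}"
    then have "i \<le> m" "\<not> (k \<le> i \<and> i \<le> m)" using assms(2) by auto
    then show "i \<in> {..<k}" by simp
  qed
  show "\<And>i j. i \<in> I - {k..m} \<Longrightarrow> j \<in> {k..m} \<Longrightarrow> i + 2 \<le> j"
  proof -
    fix i j assume "i \<in> I - {k..m}" "j \<in> {k..m}"
    then have "i < k" "i \<in> I" "k \<le> j" using sub by auto
    then show "i + 2 \<le> j" using assms(3) by fastforce
  qed
  show "I - {k..m} \<subseteq> {..<m}"
  proof
    fix i assume "i \<in> I - {k..m}"
    then have "i \<le> m" "\<not> (k \<le> i \<and> i \<le> m)" using assms(2) by auto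
    then show "i \<in> {..<m}" using assms(4) by simp
  qed
qed

context
  fixes m :: nat
  assumes IPH: "\<And>I J. I \<subseteq> {..<m} \<Longrightarrow> J \<subseteq> {..<m} \<Longrightarrow> G I \<inter> G J \<subseteq> G (I \<inter> J)"
    and HA: "\<And>k. k \<le> m \<Longrightarrow> G {..<m} \<inter> G {k..m} \<subseteq> G {k..<m}"
begin

lemma claimB:
  assumes "I \<subseteq> {..m}" "x \<in> G I" "x \<in> G {..<m}"
  shows "x \<in> G (I - {m})"
proof (cases "m \<in> I")
  case False
  then show ?thesis using assms by auto
next
  case True
  obtain k where k: "k \<le> m" "{k..m} \<subseteq> I" "\<forall>i\<in>I. i < k \<longrightarrow> i + 2 \<le> k"
    using block_exists[OF True assms(1)] by blast
  note sp = split_block[OF k(2) assms(1) k(3) k(1)]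
  obtain a b where ab: "a \<in> G (I - {k..m})" "b \<in> G {k..m}" "x = a \<circ> b"
    using Gdec[OF sp(2)] assms(2) sp(1) by metis
  have aH: "a \<in> G {..<m}" using ab(1) Gmono[OF sp(3)] by blast
  have "b = finv a \<circ> x" using cancel_l[OF inv_l[OF ab(1)] ab(3)] .
  then have "b \<in> G {..<m}" using Gcomp[OF inv_in[OF aH] assms(3)] by simp
  then have "b \<in> G {k..<m}" using HA[OF k(1)] ab(2) by blast
  then have b2: "b \<in> G (I - {m})" using Gmono[of "{k..<m}" "I - {m}"] k(2) by fastforce
  have "a \<in> G (I - {m})" using ab(1) Gmono[of "I - {k..m}" "I - {m}"] k(1) by fastforce
  then show ?thesis using b2 ab(3) Gcomp by blast
qed

lemma subclaim:
  assumes J: "J \<subseteq> {..m}" "{l..m} \<subseteq> J" "\<forall>i\<in>J. i < l \<longrightarrow> i + 2 \<le> l" and kl: "k \<le> l" "l \<le> m"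
    and y: "y \<in> G {k..m}" "y \<in> G J"
  shows "y \<in> G ({k..m} \<inter> J)"
proof -
  note sp = split_block[OF J(2) J(1) J(3) kl(2)]
  obtain c d where cd: "c \<in> G (J - {l..m})" "d \<in> G {l..m}" "y = c \<circ> d"
    using Gdec[OF sp(2)] y(2) sp(1) by metis
  have dk: "d \<in> G {k..m}" using cd(2) Gmono[of "{l..m}" "{k..m}"] kl by auto
  have "c = y \<circ> finv d" using cancel_r[OF inv_r[OF cd(2)] cd(3)] .
  then have ck: "c \<in> G {k..m}" using Gcomp[OF y(1) inv_in[OF dk]] by simp
  have cH: "c \<in> G {..<m}" using cd(1) Gmono[OF sp(3)] by blast
  have "c \<in> G {k..<m}" using HA[of k] kl ck cH by auto
  moreover have "{k..<m} \<subseteq> {..<m}" by auto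
  ultimately have "c \<in> G ({k..<m} \<inter> (J - {l..m}))" using IPH[of "{k..<m}" "J - {l..m}"] cd(1) sp(3) by blast
  moreover have "{k..<m} \<inter> (J - {l..m}) \<subseteq> {k..m} \<inter> J" by auto
  ultimately have c2: "c \<in> G ({k..m} \<inter> J)" using Gmono by blast
  have "d \<in> G ({k..m} \<inter> J)" using cd(2) Gmono[of "{l..m}" "{k..m} \<inter> J"] J(2) kl by auto
  then show ?thesis using c2 cd(3) Gcomp by blast
qed

lemma main_both_asym:
  assumes I: "I \<subseteq> {..m}" "{k..m} \<subseteq> I" "\<forall>i\<in>I. i < k \<longrightarrow> i + 2 \<le> k" "k \<le> m"
    and J: "J \<subseteq> {..m}" "{l..m} \<subseteq> J" "\<forall>i\<in>J. i < l \<longrightarrow> i + 2 \<le> l" "l \<le> m"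
    and kl: "k \<le> l" and x: "x \<in> G I" "x \<in> G J"
  shows "x \<in> G (I \<inter> J)"
proof -
  note spI = split_block[OF I(2) I(1) I(3) I(4)]
  note spJ = split_block[OF J(2) J(1) J(3) J(4)]
  obtain a b where ab: "a \<in> G (I - {k..m})" "b \<in> G {k..m}" "x = a \<circ> b"
    using Gdec[OF spI(2)] x(1) spI(1) by metis
  obtain c d where cd: "c \<in> G (J - {l..m})" "d \<in> G {l..m}" "x = c \<circ> d"
    using Gdec[OF spJ(2)] x(2) spJ(1) by metis
  have dk: "d \<in> G {k..m}" using cd(2) Gmono[of "{l..m}" "{k..m}"] kl by auto
  have aH: "a \<in> G {..<m}" using ab(1) Gmono[OF spI(3)] by blast
  have cH: "c \<in> G {..<m}" using cd(1) Gmono[OF spJ(3)] by blast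
  have eq: "finv c \<circ> a = d \<circ> finv b"
    using swap_eq[OF inv_l[OF cd(1)] inv_r[OF ab(2)]] ab(3) cd(3) by simp
  define f where "f = finv c \<circ> a"
  have fk: "f \<in> G {k..m}" using eq Gcomp[OF dk inv_in[OF ab(2)]] f_def by simp
  have fH: "f \<in> G {..<m}" using Gcomp[OF inv_in[OF cH] aH] f_def by simp
  have fk2: "f \<in> G {k..<m}" using HA[OF I(4)] fk fH by blast
  have "a = c \<circ> f" using cancel_l[of c "finv c" f a] f_def inv_r[OF cd(1)] by simp
  then have "a \<in> G ((J - {l..m}) \<union> {k..<m})"
    using Gcomp[of c _ f] Gmono[of "J - {l..m}" "(J - {l..m}) \<union> {k..<m}"]
      Gmono[of "{k..<m}" "(J - {l..m}) \<union> {k..<m}"] cd(1) fk2 by blast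
  moreover have "(J - {l..m}) \<union> {k..<m} \<subseteq> {..<m}" using spJ(3) by auto
  ultimately have "a \<in> G ((I - {k..m}) \<inter> ((J - {l..m}) \<union> {k..<m}))"
    using IPH[of "I - {k..m}" "(J - {l..m}) \<union> {k..<m}"] ab(1) spI(3) spJ(3) by blast
  moreover have "(I - {k..m}) \<inter> ((J - {l..m}) \<union> {k..<m}) \<subseteq> I \<inter> J" by auto
  ultimately have aIJ: "a \<in> G (I \<inter> J)" using Gmono by blast
  have aJ: "a \<in> G J" using aIJ Gmono[of "I \<inter> J" J] by auto
  have "b = finv a \<circ> x" using cancel_l[OF inv_l[OF ab(1)] ab(3)] .
  then have "b \<in> G J" using Gcomp[OF inv_in[OF aJ] x(2)] by simp
  then have "b \<in> G ({k..m} \<inter> J)" using subclaim[OF J(1-3) kl J(4) ab(2)] by blast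
  then have "b \<in> G (I \<inter> J)" using Gmono[of "{k..m} \<inter> J" "I \<inter> J"] I(2) by auto
  then show ?thesis using aIJ ab(3) Gcomp by blast
qed

lemma IP_step:
  assumes "I \<subseteq> {..m}" "J \<subseteq> {..m}" shows "G I \<inter> G J \<subseteq> G (I \<inter> J)"
proof
  fix x assume x: "x \<in> G I \<inter> G J"
  show "x \<in> G (I \<inter> J)"
  proof (cases "m \<in> I")
    case mI: True
    show ?thesis
    proof (cases "m \<in> J")
      case mJ: True
      obtain k where k: "k \<le> m" "{k..m} \<subseteq> I" "\<forall>i\<in>I. i < k \<longrightarrow> i + 2 \<le> k"
        using block_exists[OF mI assms(1)] by blast
      obtain l where l: "l \<le> m" "{l..m} \<subseteq> J" "\<forall>i\<in>J. i < l \<longrightarrow> i + 2 \<le> l"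
        using block_exists[OF mJ assms(2)] by blast
      show ?thesis
      proof (cases "k \<le> l")
        case True then show ?thesis using main_both_asym[OF assms(1) k(2,3,1) assms(2) l(2,3,1)] x by blast
      next
        case False then show ?thesis
          using main_both_asym[OF assms(2) l(2,3,1) assms(1) k(2,3,1)] x by (auto simp: Int_commute)
      qed
    next
      case mJ: False
      then have "J \<subseteq> {..<m}" using assms(2) by (auto simp: le_less)
      then have "x \<in> G {..<m}" using x Gmono by blast
      then have "x \<in> G (I - {m})" using claimB[OF assms(1)] x by blast
      then have "x \<in> G ((I - {m}) \<inter> J)" using IPH[of "I - {m}" J] x assms(1) \<open>J \<subseteq> {..<m}\<close> by fastforce
      then show ?thesis using Gmono[of "(I - {m}) \<inter> J" "I \<inter> J"] by blast
    qed
  next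
    case mI: False
    then have IH: "I \<subseteq> {..<m}" using assms(1) by (auto simp: le_less)
    show ?thesis
    proof (cases "m \<in> J")
      case True
      have "x \<in> G {..<m}" using x Gmono[OF IH] by blast
      then have "x \<in> G (J - {m})" using claimB[OF assms(2)] x by blast
      then have "x \<in> G (I \<inter> (J - {m}))" using IPH[of I "J - {m}"] x IH assms(2) by fastforce
      then show ?thesis using Gmono[of "I \<inter> (J - {m})" "I \<inter> J"] by blast
    next
      case False
      then have "J \<subseteq> {..<m}" using assms(2) by (auto simp: le_less)
      then show ?thesis using IPH[OF IH] x by blast
    qed
  qed
qed

end

theorem IP_all:
  assumes HA: "\<And>m k. m < N \<Longrightarrow> k \<le> m \<Longrightarrow> G {..<m} \<inter> G {k..m} \<subseteq> G {k..<m}"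
  shows "\<And>I J. I \<subseteq> {..<N} \<Longrightarrow> J \<subseteq> {..<N} \<Longrightarrow> G I \<inter> G J \<subseteq> G (I \<inter> J)"
proof -
  have "\<forall>I J. I \<subseteq> {..<m} \<longrightarrow> J \<subseteq> {..<m} \<longrightarrow> G I \<inter> G J \<subseteq> G (I \<inter> J)" if "m \<le> N" for m
    using that
  proof (induction m)
    case 0 then show ?case by auto
  next
    case (Suc m)
    then have "m < N" by auto
    have "G I \<inter> G J \<subseteq> G (I \<inter> J)" if "I \<subseteq> {..m}" "J \<subseteq> {..m}" for I J
      using IP_step[of m I J] Suc HA[OF \<open>m < N\<close>] that by auto
    then show ?case by (simp add: lessThan_Suc_atMost)
  qed
  then show "\<And>I J. I \<subseteq> {..<N} \<Longrightarrow> J \<subseteq> {..<N} \<Longrightarrow> G I \<inter> G J \<subseteq> G (I \<inter> J)" by blast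
qed

end

definition ee :: "nat \<Rightarrow> nat \<Rightarrow> nat + nat \<Rightarrow> nat + nat" where
"ee r k x = (case x of Inl i \<Rightarrow> if k < r then (if i = k then Inl (Suc k) else if i = Suc k then Inl k
        else if i = r \<and> k = r - 2 then Inr r else Inl i) else Inl i
  | Inr i \<Rightarrow> if 2 \<le> k \<and> k < r then (if i = k then Inr (Suc k) else if i = Suc k then Inr k
        else if i = r \<and> k = r - 2 then Inl r else Inr i) else Inr i)"

lemma ee_Inl: "ee r k (Inl i) = (if k < r then (if i = k then Inl (Suc k) else if i = Suc k then Inl k
        else if i = r \<and> k = r - 2 then Inr r else Inl i) else Inl i)"
  by (simp add: ee_def)
lemma ee_Inr: "ee r k (Inr i) = (if 2 \<le> k \<and> k < r then (if i = k then Inr (Suc k) else if i = Suc k then Inr k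
        else if i = r \<and> k = r - 2 then Inl r else Inr i) else Inr i)"
  by (simp add: ee_def)

lemma ee_inv: assumes "4 \<le> r" shows "ee r k \<circ> ee r k = id"
proof
  fix x show "(ee r k \<circ> ee r k) x = id x"
    using assms by (cases x) (auto simp: ee_Inl ee_Inr)
qed

lemma ee_comm: assumes "4 \<le> r" "i + 2 \<le> j" shows "ee r i \<circ> ee r j = ee r j \<circ> ee r i"
proof
  fix x show "(ee r i \<circ> ee r j) x = (ee r j \<circ> ee r i) x"
    using assms by (cases x) (auto simp: ee_Inl ee_Inr)
qed

lemma mem_edgesP: "(E, k) \<in> edgesP r \<longleftrightarrow>
   (k \<le> r - 1 \<and> E = {Inl k, Inl (Suc k)}) \<or> (2 \<le> k \<and> k \<le> r - 1 \<and> E = {Inr k, Inr (Suc k)})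
   \<or> (k = r - 2 \<and> E = {Inl r, Inr r})"
  unfolding edgesP_def by auto

lemma edge_char: assumes "4 \<le> r" "k < r"
  shows "(y \<noteq> x \<and> ({x, y}, k) \<in> edgesP r) \<longleftrightarrow> (ee r k x \<noteq> x \<and> y = ee r k x)"
  unfolding mem_edgesP doubleton_eq_iff using assms
  by (cases x; cases y) (auto simp: ee_Inl ee_Inr)

lemma edge_perm_ee: assumes "4 \<le> r" "k < r" shows "edge_perm (edgesP r) k = ee r k"
proof
  fix x
  show "edge_perm (edgesP r) k x = ee r k x"
  proof (cases "ee r k x = x")
    case True
    then have nex: "\<not> (\<exists>y. y \<noteq> x \<and> ({x, y}, k) \<in> edgesP r)" using edge_char[OF assms] by metis
    show ?thesis unfolding edge_perm_def if_not_P[OF nex] using True by simp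
  next
    case False
    then have ex: "\<exists>y. y \<noteq> x \<and> ({x, y}, k) \<in> edgesP r" using edge_char[OF assms] by metis
    have "(THE y. y \<noteq> x \<and> ({x, y}, k) \<in> edgesP r) = ee r k x"
      using edge_char[OF assms] False by (intro the_equality) auto
    then show ?thesis unfolding edge_perm_def using ex by simp
  qed
qed

definition tvw :: "nat \<Rightarrow> nat + nat \<Rightarrow> nat + nat" where
  "tvw r = Transposition.transpose (Inl r) (Inr r)"
definition tt :: "nat \<Rightarrow> nat \<Rightarrow> nat" where "tt i = Transposition.transpose i (Suc i)"
definition vs :: "(nat \<Rightarrow> nat) \<Rightarrow> nat + nat \<Rightarrow> nat + nat" where "vs a = map_sum a id"
definition dg :: "(nat \<Rightarrow> nat) \<Rightarrow> nat + nat \<Rightarrow> nat + nat" where "dg a = map_sum a a"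
definition ww :: "nat \<Rightarrow> nat \<Rightarrow> nat + nat \<Rightarrow> nat + nat" where
  "ww r i = map_sum id (tt i) \<circ> (if i = r - 2 then tvw r else id)"
definition th :: "nat + nat \<Rightarrow> nat + nat" where
  "th x = (case x of Inl i \<Rightarrow> if 2 \<le> i then Inr i else Inl i | Inr i \<Rightarrow> if 2 \<le> i then Inl i else Inr i)"

lemma vs_comp: "vs (f \<circ> g) = vs f \<circ> vs g" by (simp add: vs_def map_sum.comp)
lemma dg_comp: "dg (f \<circ> g) = dg f \<circ> dg g" by (simp add: dg_def map_sum.comp)
lemma vs_id: "vs id = id" by (simp add: vs_def map_sum.id)
lemma dg_id: "dg id = id" by (simp add: dg_def map_sum.id)

lemma vs_transpose: "vs (Transposition.transpose a b) = Transposition.transpose (Inl a) (Inl b)"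
proof
  fix x show "vs (Transposition.transpose a b) x = Transposition.transpose (Inl a) (Inl b) x"
    by (cases x) (auto simp: vs_def Transposition.transpose_def)
qed

lemma conj_transpose: assumes "g \<circ> g = id"
  shows "g \<circ> Transposition.transpose a b \<circ> g = Transposition.transpose (g a) (g b)"
proof
  fix x
  have gg: "\<And>y. g (g y) = y" using assms by (metis comp_apply id_apply)
  show "(g \<circ> Transposition.transpose a b \<circ> g) x = Transposition.transpose (g a) (g b) x"
    by (auto simp: Transposition.transpose_def gg)
qed

lemma tt_conj: "k < b \<Longrightarrow> tt b \<circ> Transposition.transpose k b \<circ> tt b = Transposition.transpose k (Suc b)"
  unfolding tt_def by (subst conj_transpose) auto

locale conc =
  fixes r :: nat
  assumes r4: "4 \<le> r"
begin

sublocale invfam "ee r"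
  by unfold_locales (auto intro: ee_inv ee_comm r4)

lemma e_small: "k < 2 \<Longrightarrow> ee r k = vs (tt k)"
proof
  fix x assume "k < 2" then show "ee r k x = vs (tt k) x"
    using r4 by (cases x) (auto simp: ee_Inl ee_Inr vs_def tt_def Transposition.transpose_def)
qed

lemma e_big: "2 \<le> k \<Longrightarrow> k < r \<Longrightarrow> ee r k = vs (tt k) \<circ> ww r k"
proof
  fix x assume "2 \<le> k" "k < r" then show "ee r k x = (vs (tt k) \<circ> ww r k) x"
    using r4 by (cases x) (auto simp: ee_Inl ee_Inr vs_def ww_def tvw_def tt_def Transposition.transpose_def)
qed

lemma e_dg: "2 \<le> k \<Longrightarrow> k + 3 \<le> r \<Longrightarrow> ee r k = dg (tt k)"
proof
  fix x assume "2 \<le> k" "k + 3 \<le> r" then show "ee r k x = dg (tt k) x"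
    using r4 by (cases x) (auto simp: ee_Inl ee_Inr dg_def tt_def Transposition.transpose_def)
qed

lemma e_dg2: "ee r (r - 2) = dg (tt (r - 2)) \<circ> tvw r"
proof
  fix x show "ee r (r - 2) x = (dg (tt (r - 2)) \<circ> tvw r) x"
    using r4 by (cases x) (auto simp: ee_Inl ee_Inr dg_def tvw_def tt_def Transposition.transpose_def)
qed

lemma cube: assumes "5 \<le> r"
  shows "ee r (r - 3) \<circ> ee r (r - 2) \<circ> ee r (r - 3) \<circ> ee r (r - 2) \<circ> ee r (r - 3) \<circ> ee r (r - 2) = tvw r"
proof
  fix x show "(ee r (r - 3) \<circ> ee r (r - 2) \<circ> ee r (r - 3) \<circ> ee r (r - 2) \<circ> ee r (r - 3) \<circ> ee r (r - 2)) x = tvw r x"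
    using assms by (cases x) (auto simp: ee_Inl ee_Inr tvw_def Transposition.transpose_def)
qed

lemma e_th: "2 \<le> k \<Longrightarrow> ee r k \<circ> th = th \<circ> ee r k"
proof
  fix x assume "2 \<le> k" then show "(ee r k \<circ> th) x = (th \<circ> ee r k) x"
    using r4 by (cases x) (auto simp: ee_Inl ee_Inr th_def)
qed

lemma ww_vs: "a r = r \<Longrightarrow> inj a \<Longrightarrow> ww r i \<circ> vs a = vs a \<circ> ww r i"
proof
  fix x assume ar: "a r = r" "inj a"
  then have [simp]: "a y = r \<longleftrightarrow> y = r" "r = a y \<longleftrightarrow> y = r" for y by (metis injD)+
  show "(ww r i \<circ> vs a) x = (vs a \<circ> ww r i) x"
    using ar by (cases x) (auto simp: ww_def vs_def tvw_def Transposition.transpose_def)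
qed

lemma tvw_dg: "a r = r \<Longrightarrow> inj a \<Longrightarrow> tvw r \<circ> dg a = dg a \<circ> tvw r"
proof
  fix x assume ar: "a r = r" "inj a"
  then have [simp]: "a y = r \<longleftrightarrow> y = r" "r = a y \<longleftrightarrow> y = r" for y by (metis injD)+
  show "(tvw r \<circ> dg a) x = (dg a \<circ> tvw r) x"
    using ar by (cases x) (auto simp: dg_def tvw_def Transposition.transpose_def)
qed

lemma tvw_inv: "tvw r \<circ> tvw r = id" by (simp add: tvw_def)
lemma vs_tt_inv: "vs (tt i) \<circ> vs (tt i) = id" by (simp add: vs_comp[symmetric] tt_def vs_id)
lemma dg_tt_inv: "dg (tt i) \<circ> dg (tt i) = id" by (simp add: dg_comp[symmetric] tt_def dg_id)

end

lemma star_chain: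
  fixes F :: "(nat \<Rightarrow> nat) \<Rightarrow> 'b \<Rightarrow> 'b"
  assumes Fid: "F id \<in> C"
    and base: "a < c \<Longrightarrow> F (Transposition.transpose a (Suc a)) \<in> C"
    and step: "\<And>b. a < b \<Longrightarrow> b < c \<Longrightarrow> F (Transposition.transpose a b) \<in> C
               \<Longrightarrow> F (Transposition.transpose a (Suc b)) \<in> C"
  shows "a \<le> b \<Longrightarrow> b \<le> c \<Longrightarrow> F (Transposition.transpose a b) \<in> C"
proof (induction b)
  case 0 then show ?case by (metis Fid le_zero_eq transpose_same)
next
  case (Suc b)
  show ?case
  proof (cases "a = Suc b")
    case True then show ?thesis by (metis Fid transpose_same)
  next
    case False
    then have ab: "a \<le> b" using Suc by simp
    show ?thesis
    proof (cases "a = b")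
      case True then show ?thesis using base Suc by simp
    next
      case False then show ?thesis using step[of b] Suc ab by simp
    qed
  qed
qed

lemma perm_from_star:
  fixes F :: "(nat \<Rightarrow> nat) \<Rightarrow> 'b \<Rightarrow> 'b"
  assumes comp: "\<And>f g. f \<in> C \<Longrightarrow> g \<in> C \<Longrightarrow> f \<circ> g \<in> C" and Fid: "F id \<in> C"
    and Fhom: "\<And>f g. F (f \<circ> g) = F f \<circ> F g"
    and star: "\<And>b. a \<le> b \<Longrightarrow> b \<le> c \<Longrightarrow> F (Transposition.transpose a b) \<in> C"
    and p: "p permutes {a..c}"
  shows "F p \<in> C"
proof -
  have all: "F (Transposition.transpose x y) \<in> C" if "x \<in> {a..c}" "y \<in> {a..c}" for x y
  proof (cases "x = a \<or> y = a \<or> x = y")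
    case True
    then consider "x = a" | "y = a" | "x = y" by blast
    then show ?thesis
    proof cases
      case 1 then show ?thesis using star that by auto
    next
      case 2 then show ?thesis using star[of x] that by (auto simp: transpose_commute)
    next
      case 3 then show ?thesis by (metis Fid transpose_same)
    qed
  next
    case False
    then have "Transposition.transpose x a \<circ> Transposition.transpose a y \<circ> Transposition.transpose x a
       = Transposition.transpose x y" by (intro transpose_comp_triple) auto
    then have "F (Transposition.transpose x y) = F (Transposition.transpose a x) \<circ> F (Transposition.transpose a y)
       \<circ> F (Transposition.transpose a x)" by (metis Fhom transpose_commute)
    then show ?thesis using star that comp by auto
  qed
  show ?thesis using p finite_atLeastAtMost[of a c]
  proof (induction rule: permutes_induct)
    case id then show ?case using Fid .
  next
    case (swap a' b' p)
    have "F (Transposition.transpose a' b') \<in> C" using all swap(1,2) by blast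
    then show ?case unfolding Fhom using comp swap(5) by blast
  qed
qed

context conc
begin

lemma e_in: "i \<in> J \<Longrightarrow> ee r i \<in> G J"
  by (rule gen_incl) simp

lemma vs_in: assumes "c \<le> r - 1" "\<alpha> permutes {1..c}" shows "vs \<alpha> \<in> G {1..<c}"
proof (rule perm_from_star[where F = vs and a = 1 and c = c])
  show "vs id \<in> G {1..<c}" by (simp add: vs_id gen.gid)
  show "\<And>b. 1 \<le> b \<Longrightarrow> b \<le> c \<Longrightarrow> vs (Transposition.transpose 1 b) \<in> G {1..<c}"
  proof (rule star_chain)
    show "vs id \<in> G {1..<c}" by (simp add: vs_id gen.gid)
    show "1 < c \<Longrightarrow> vs (Transposition.transpose 1 (Suc 1)) \<in> G {1..<c}"
      using e_small[of 1] e_in[of 1 "{1..<c}"] by (simp add: tt_def)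
    fix b assume b: "1 < b" "b < c" "vs (Transposition.transpose 1 b) \<in> G {1..<c}"
    have "b < r" using b assms(1) r4 by linarith
    have "ee r b \<circ> vs (Transposition.transpose 1 b) \<circ> ee r b = vs (Transposition.transpose 1 (Suc b))"
      using \<open>b < r\<close> unfolding vs_transpose conj_transpose[OF ee_inv[OF r4]] using b assms(1) r4
      by (simp add: ee_Inl)
    moreover have "ee r b \<in> G {1..<c}" using b by (intro e_in) auto
    ultimately show "vs (Transposition.transpose 1 (Suc b)) \<in> G {1..<c}"
      using b(3) Gcomp by metis
  qed
qed (use assms(2) in \<open>auto simp: Gcomp vs_comp\<close>)

lemma dg_in: assumes "2 \<le> k" "c + 2 \<le> r" "\<sigma> permutes {k..c}" shows "dg \<sigma> \<in> G {k..<c}"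
proof (rule perm_from_star[where F = dg and a = k and c = c])
  show "dg id \<in> G {k..<c}" by (simp add: dg_id gen.gid)
  show "\<And>b. k \<le> b \<Longrightarrow> b \<le> c \<Longrightarrow> dg (Transposition.transpose k b) \<in> G {k..<c}"
  proof (rule star_chain)
    show "dg id \<in> G {k..<c}" by (simp add: dg_id gen.gid)
    show "k < c \<Longrightarrow> dg (Transposition.transpose k (Suc k)) \<in> G {k..<c}"
      using e_dg[of k] e_in[of k "{k..<c}"] assms by (simp add: tt_def)
    fix b assume b: "k < b" "b < c" "dg (Transposition.transpose k b) \<in> G {k..<c}"
    have "dg (tt b) \<circ> dg (Transposition.transpose k b) \<circ> dg (tt b) = dg (Transposition.transpose k (Suc b))"
      using tt_conj[OF b(1)] by (simp add: dg_comp[symmetric])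
    moreover have "dg (tt b) \<in> G {k..<c}" using b assms e_dg[of b] e_in[of b "{k..<c}"] by auto
    ultimately show "dg (Transposition.transpose k (Suc b)) \<in> G {k..<c}"
      using b(3) Gcomp by metis
  qed
qed (use assms(3) in \<open>auto simp: Gcomp dg_comp\<close>)

lemma tvw_in: assumes "2 \<le> k" "k + 3 \<le> r" shows "tvw r \<in> G {k..r-2}"
proof -
  have "r - 3 \<in> {k..r-2}" "r - 2 \<in> {k..r-2}" using assms by auto
  then have "ee r (r - 3) \<in> G {k..r-2}" "ee r (r - 2) \<in> G {k..r-2}" by (auto intro: e_in)
  moreover have "5 \<le> r" using assms by simp
  ultimately show ?thesis using cube Gcomp by metis
qed

end

lemma permutes_Int: "p permutes S \<Longrightarrow> p permutes T \<Longrightarrow> p permutes (S \<inter> T)"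
  unfolding permutes_def by blast

lemma tt_permutes: "a \<le> i \<Longrightarrow> i \<le> b \<Longrightarrow> tt i permutes {a..Suc b}"
  unfolding tt_def by (rule permutes_swap_id) auto

lemma gen_sub: assumes "S \<subseteq> gen T" shows "gen S \<subseteq> gen T"
proof
  fix g assume "g \<in> gen S" then show "g \<in> gen T"
  proof induction
    case gid show ?case by (rule gen.gid)
  next
    case (gstep s g) then show ?case using assms gen_comp by blast
  qed
qed

context conc
begin

lemma perm_fix_r: "\<alpha> permutes {a..Suc b} \<Longrightarrow> b + 2 \<le> r \<Longrightarrow> \<alpha> r = r"
  by (rule permutes_not_in) auto

lemma dec:
  assumes "a \<le> 1" "b + 2 \<le> r" "x \<in> G {a..b}"
  shows "\<exists>\<alpha> z. \<alpha> permutes {a..Suc b} \<and> z \<in> gen (ww r ` {2..b}) \<and> x = vs \<alpha> \<circ> z"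
  using assms(3)
proof induction
  case gid then show ?case
    by (intro exI[of _ id] conjI permutes_id gen.gid) (metis vs_id comp_id)
next
  case (gstep s g)
  then obtain \<alpha> z where az: "\<alpha> permutes {a..Suc b}" "z \<in> gen (ww r ` {2..b})" "g = vs \<alpha> \<circ> z" by blast
  from gstep(1) obtain i where i: "i \<in> {a..b}" "s = ee r i" by blast
  have tp: "tt i permutes {a..Suc b}" using i by (intro tt_permutes) auto
  have tap: "tt i \<circ> \<alpha> permutes {a..Suc b}" by (rule permutes_compose[OF az(1) tp])
  show ?case
  proof (cases "i < 2")
    case True
    then have "s \<circ> g = vs (tt i \<circ> \<alpha>) \<circ> z" using i az by (simp add: e_small vs_comp o_assoc)
    then show ?thesis using tap az(2) by blast
  next
    case False
    have ir: "i < r" using i assms by auto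
    have comm: "ww r i \<circ> vs \<alpha> = vs \<alpha> \<circ> ww r i"
      by (rule ww_vs[OF perm_fix_r[OF az(1) assms(2)] permutes_inj[OF az(1)]])
    have "s \<circ> g = vs (tt i) \<circ> (ww r i \<circ> vs \<alpha>) \<circ> z" using i az False ir
      by (simp add: e_big o_assoc)
    also have "\<dots> = vs (tt i \<circ> \<alpha>) \<circ> (ww r i \<circ> z)" unfolding comm by (simp add: vs_comp o_assoc)
    finally have "s \<circ> g = vs (tt i \<circ> \<alpha>) \<circ> (ww r i \<circ> z)" .
    moreover have "ww r i \<circ> z \<in> gen (ww r ` {2..b})" using az(2) False i by (intro gen.gstep) auto
    ultimately show ?thesis using tap by blast
  qed
qed

lemma ds:
  assumes "2 \<le> k" "m + 2 \<le> r" "x \<in> G {k..m}"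
  shows "\<exists>\<sigma> T. \<sigma> permutes {k..Suc m} \<and> (T = id \<or> T = tvw r) \<and> x = dg \<sigma> \<circ> T"
  using assms(3)
proof induction
  case gid then show ?case
    by (intro exI[of _ id] conjI permutes_id disjI1 refl) (metis dg_id comp_id)
next
  case (gstep s g)
  then obtain \<sigma> T where sT: "\<sigma> permutes {k..Suc m}" "T = id \<or> T = tvw r" "g = dg \<sigma> \<circ> T" by blast
  from gstep(1) obtain i where i: "i \<in> {k..m}" "s = ee r i" by blast
  have tp: "tt i permutes {k..Suc m}" using i by (intro tt_permutes) auto
  have tap: "tt i \<circ> \<sigma> permutes {k..Suc m}" by (rule permutes_compose[OF sT(1) tp])
  show ?case
  proof (cases "i + 3 \<le> r")
    case True
    then have "s \<circ> g = dg (tt i \<circ> \<sigma>) \<circ> T" using i sT assms by (simp add: e_dg dg_comp o_assoc)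
    then show ?thesis using tap sT(2) by blast
  next
    case False
    then have ir: "i = r - 2" using i assms by auto
    have comm: "tvw r \<circ> dg \<sigma> = dg \<sigma> \<circ> tvw r"
      by (rule tvw_dg[OF perm_fix_r[OF sT(1) assms(2)] permutes_inj[OF sT(1)]])
    have "s \<circ> g = dg (tt i) \<circ> (tvw r \<circ> dg \<sigma>) \<circ> T" using i sT ir
      by (simp add: e_dg2 o_assoc)
    also have "\<dots> = dg (tt i \<circ> \<sigma>) \<circ> (tvw r \<circ> T)" unfolding comm by (simp add: dg_comp o_assoc)
    finally have "s \<circ> g = dg (tt i \<circ> \<sigma>) \<circ> (tvw r \<circ> T)" .
    moreover have "tvw r \<circ> T = id \<or> tvw r \<circ> T = tvw r" using sT(2) tvw_inv by auto
    ultimately show ?thesis using tap by blast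
  qed
qed

lemma wfix: assumes "z \<in> gen (ww r ` {2..b})" "i < r" shows "z (Inl i) = Inl i"
  using assms(1) by (rule gen_fix[rotated]) (use assms(2) in \<open>auto simp: ww_def tvw_def Transposition.transpose_def\<close>)

lemma wfix_r: assumes "z \<in> gen (ww r ` {2..b})" "b + 3 \<le> r" shows "z (Inl r) = Inl r"
  using assms(1) by (rule gen_fix[rotated]) (use assms(2) in \<open>auto simp: ww_def tvw_def Transposition.transpose_def\<close>)

lemma wing: assumes "b + 2 \<le> r" shows "gen (ww r ` {2..b}) \<subseteq> G {1..b}"
proof -
  have "ww r i \<in> G {1..b}" if "i \<in> {2..b}" for i
  proof -
    have "vs (tt i) \<in> G {1..<Suc b}" using that assms by (intro vs_in tt_permutes) auto
    then have v: "vs (tt i) \<in> G {1..b}" by (simp add: atLeastLessThanSuc_atLeastAtMost)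
    have "ee r i = vs (tt i) \<circ> ww r i" using that assms by (intro e_big) auto
    then have "vs (tt i) \<circ> ee r i = ww r i" using vs_tt_inv[of i] by (simp add: o_assoc)
    moreover have "ee r i \<in> G {1..b}" using that by (intro e_in) auto
    ultimately show ?thesis using v Gcomp by metis
  qed
  then have "ww r ` {2..b} \<subseteq> G {1..b}" by blast
  then show ?thesis by (rule gen_sub)
qed

end

lemma two_point:
  assumes "inj u" "\<And>p. p \<noteq> a \<Longrightarrow> p \<noteq> b \<Longrightarrow> u p = p" "a \<noteq> b"
  shows "u = id \<or> u = Transposition.transpose a b"
proof -
  have ua: "u a = a \<or> u a = b"
  proof (rule ccontr)
    assume "\<not> (u a = a \<or> u a = b)"
    then have "u (u a) = u a" using assms(2) by auto
    then have "u a = a" using assms(1) by (metis injD)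
    then show False using \<open>\<not> (u a = a \<or> u a = b)\<close> by simp
  qed
  have ub: "u b = a \<or> u b = b"
  proof (rule ccontr)
    assume "\<not> (u b = a \<or> u b = b)"
    then have "u (u b) = u b" using assms(2) by auto
    then have "u b = b" using assms(1) by (metis injD)
    then show False using \<open>\<not> (u b = a \<or> u b = b)\<close> by simp
  qed
  show ?thesis
  proof (cases "u a = a")
    case True
    then have "u b = b" using ub assms(1,3) by (metis injD)
    then have "u = id" using True assms(2) by (intro ext) (metis id_apply)
    then show ?thesis by simp
  next
    case False
    then have "u a = b" using ua by simp
    then have "u b = a" using ub assms(1,3) by (metis injD)
    then have "u = Transposition.transpose a b" using \<open>u a = b\<close> assms(2)
      by (intro ext) (auto simp: Transposition.transpose_def)
    then show ?thesis by simp
  qed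
qed

definition H6 :: "nat \<Rightarrow> (nat + nat) set" where
  "H6 r = {Inl (r - 2), Inl (r - 1), Inr r, Inr (r - 2), Inr (r - 1), Inl r}"

definition hadj :: "nat \<Rightarrow> nat + nat \<Rightarrow> nat + nat \<Rightarrow> bool" where
  "hadj r p q \<longleftrightarrow>
     (p = Inl (r - 2) \<and> q = Inl (r - 1)) \<or> (q = Inl (r - 2) \<and> p = Inl (r - 1)) \<or>
     (p = Inl (r - 1) \<and> q = Inr r) \<or> (q = Inl (r - 1) \<and> p = Inr r) \<or>
     (p = Inr r \<and> q = Inr (r - 2)) \<or> (q = Inr r \<and> p = Inr (r - 2)) \<or>
     (p = Inr (r - 2) \<and> q = Inr (r - 1)) \<or> (q = Inr (r - 2) \<and> p = Inr (r - 1)) \<or>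
     (p = Inr (r - 1) \<and> q = Inl r) \<or> (q = Inr (r - 1) \<and> p = Inl r) \<or>
     (p = Inl r \<and> q = Inl (r - 2)) \<or> (q = Inl r \<and> p = Inl (r - 2))"

definition hexset :: "nat \<Rightarrow> (nat + nat \<Rightarrow> nat + nat) set" where
  "hexset r = {x. inj x \<and> (\<forall>p. p \<notin> H6 r \<longrightarrow> x p = p) \<and> (\<forall>p q. hadj r p q \<longrightarrow> hadj r (x p) (x q))}"

lemma hexset_comp: "x \<in> hexset r \<Longrightarrow> y \<in> hexset r \<Longrightarrow> x \<circ> y \<in> hexset r"
  unfolding hexset_def by (auto intro: inj_compose)

context conc
begin

lemma hex_vals:
  "ee r (r-2) (Inl (r-2)) = Inl (r-1)" "ee r (r-2) (Inl (r-1)) = Inl (r-2)"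
  "ee r (r-2) (Inr r) = Inl r" "ee r (r-2) (Inl r) = Inr r"
  "ee r (r-2) (Inr (r-2)) = Inr (r-1)" "ee r (r-2) (Inr (r-1)) = Inr (r-2)"
  "ee r (r-1) (Inl (r-2)) = Inl (r-2)" "ee r (r-1) (Inl (r-1)) = Inl r"
  "ee r (r-1) (Inr r) = Inr (r-1)" "ee r (r-1) (Inl r) = Inl (r-1)"
  "ee r (r-1) (Inr (r-2)) = Inr (r-2)" "ee r (r-1) (Inr (r-1)) = Inr r"
  using r4 by (auto simp: ee_Inl ee_Inr)

lemma hex_ne: "r - 2 \<noteq> r - 1" "r - 1 \<noteq> r" "r - 2 \<noteq> r" "r - 1 \<noteq> r - 2" "r \<noteq> r - 1" "r \<noteq> r - 2"
  using r4 by auto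

lemma e_hex_adj: assumes "k = r - 2 \<or> k = r - 1" "hadj r p q" shows "hadj r (ee r k p) (ee r k q)"
  using assms(2) unfolding hadj_def
  by (elim disjE conjE; use assms(1) in \<open>elim disjE\<close>; simp only: hex_vals; simp add: hex_ne)

lemma e_hex: "k = r - 2 \<or> k = r - 1 \<Longrightarrow> ee r k \<in> hexset r"
proof -
  assume k: "k = r - 2 \<or> k = r - 1"
  have "inj (ee r k)" using o_bij[OF ee_inv[OF r4, of k] ee_inv[OF r4, of k]] by (rule bij_is_inj)
  moreover have "\<forall>p. p \<notin> H6 r \<longrightarrow> ee r k p = p"
  proof (intro allI impI)
    fix p assume "p \<notin> H6 r" then show "ee r k p = p"
      using k r4 by (cases p) (auto simp: H6_def ee_Inl ee_Inr)
  qed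
  moreover have "\<forall>p q. hadj r p q \<longrightarrow> hadj r (ee r k p) (ee r k q)"
    using e_hex_adj[OF k] by blast
  ultimately show ?thesis unfolding hexset_def by blast
qed

lemma G_hex: "x \<in> G {r-2..r-1} \<Longrightarrow> x \<in> hexset r"
proof (induction rule: gen.induct)
  case gid then show ?case unfolding hexset_def by auto
next
  case (gstep s g)
  then obtain k where k: "k \<in> {r-2..r-1}" "s = ee r k" by blast
  then have "k = r - 2 \<or> k = r - 1" using r4 by auto
  then have "s \<in> hexset r" using e_hex k by auto
  then show ?case using hexset_comp gstep by blast
qed

lemma hex_fix:
  assumes "x \<in> hexset r" "x (Inl (r - 2)) = Inl (r - 2)" "x (Inl (r - 1)) = Inl (r - 1)"
  shows "x = id"
proof -
  have inj: "inj x" and out: "\<And>p. p \<notin> H6 r \<Longrightarrow> x p = p"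
    and adj: "\<And>p q. hadj r p q \<Longrightarrow> hadj r (x p) (x q)" using assms(1) unfolding hexset_def by auto
  have ne: "r - 2 \<noteq> r - 1" "r - 1 \<noteq> r" "r - 2 \<noteq> r" using r4 by auto
  have "hadj r (Inl (r - 1)) (Inr r)" by (simp add: hadj_def)
  then have "hadj r (Inl (r - 1)) (x (Inr r))" using adj assms(3) by metis
  then have "x (Inr r) = Inl (r - 2) \<or> x (Inr r) = Inr r" using ne by (auto simp: hadj_def)
  then have x2: "x (Inr r) = Inr r" using inj assms(2) by (metis injD sum.distinct(1))
  have "hadj r (Inr r) (Inr (r - 2))" by (simp add: hadj_def)
  then have "hadj r (Inr r) (x (Inr (r - 2)))" using adj x2 by metis
  then have "x (Inr (r - 2)) = Inl (r - 1) \<or> x (Inr (r - 2)) = Inr (r - 2)" using ne by (auto simp: hadj_def)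
  then have x3: "x (Inr (r - 2)) = Inr (r - 2)" using inj assms(3) by (metis injD sum.distinct(1))
  have "hadj r (Inr (r - 2)) (Inr (r - 1))" by (simp add: hadj_def)
  then have "hadj r (Inr (r - 2)) (x (Inr (r - 1)))" using adj x3 by metis
  then have "x (Inr (r - 1)) = Inr r \<or> x (Inr (r - 1)) = Inr (r - 1)" using ne by (auto simp: hadj_def)
  then have x4: "x (Inr (r - 1)) = Inr (r - 1)" using inj x2 ne by (metis injD sum.inject(2))
  have "hadj r (Inr (r - 1)) (Inl r)" by (simp add: hadj_def)
  then have "hadj r (Inr (r - 1)) (x (Inl r))" using adj x4 by metis
  then have "x (Inl r) = Inr (r - 2) \<or> x (Inl r) = Inl r" using ne by (auto simp: hadj_def)
  then have x5: "x (Inl r) = Inl r" using inj x3 by (metis injD sum.distinct(1))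
  show ?thesis
  proof
    fix p show "x p = id p"
    proof (cases "p \<in> H6 r")
      case True then show ?thesis using assms(2,3) x2 x3 x4 x5 by (auto simp: H6_def)
    next
      case False then show ?thesis using out by simp
    qed
  qed
qed

lemma hex_final:
  assumes "x \<in> hexset r" "x (Inl (r - 2)) \<in> {Inl (r - 2), Inl (r - 1)}" "x (Inl (r - 1)) \<in> {Inl (r - 2), Inl (r - 1)}"
  shows "x = id \<or> x = ee r (r - 2)"
proof -
  have inj: "inj x" using assms(1) unfolding hexset_def by auto
  have ne: "r - 2 \<noteq> r - 1" using r4 by auto
  have e0: "ee r (r - 2) (Inl (r - 2)) = Inl (r - 1)" "ee r (r - 2) (Inl (r - 1)) = Inl (r - 2)"
    using r4 by (auto simp: ee_Inl)
  show ?thesis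
  proof (cases "x (Inl (r - 2)) = Inl (r - 2)")
    case True
    then have "x (Inl (r - 1)) = Inl (r - 1)" using assms(3) inj ne by (metis injD insert_iff singletonD sum.inject(1))
    then show ?thesis using hex_fix[OF assms(1) True] by simp
  next
    case False
    then have a: "x (Inl (r - 2)) = Inl (r - 1)" using assms(2) by auto
    then have b: "x (Inl (r - 1)) = Inl (r - 2)" using assms(3) inj ne by (metis injD insert_iff singletonD sum.inject(1))
    define y where "y = ee r (r - 2) \<circ> x"
    have "y \<in> hexset r" unfolding y_def using hexset_comp e_hex assms(1) by blast
    moreover have "y (Inl (r - 2)) = Inl (r - 2)" "y (Inl (r - 1)) = Inl (r - 1)" using a b e0 y_def by auto
    ultimately have "y = id" using hex_fix by blast
    then have "ee r (r - 2) \<circ> y = ee r (r - 2)" by simp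
    then have "x = ee r (r - 2)" unfolding y_def using ee_inv[OF r4] by (simp add: o_assoc)
    then show ?thesis by simp
  qed
qed

lemma dg_in2: assumes "2 \<le> k" "k + 3 \<le> r" "\<sigma> permutes {k..r-1}" "T = id \<or> T = tvw r"
  shows "dg \<sigma> \<circ> T \<in> G {k..r-2}"
proof -
  have tv: "tvw r \<in> G {k..r-2}" by (rule tvw_in[OF assms(1,2)])
  have dgt: "dg (tt b) \<in> G {k..r-2}" if "k \<le> b" "b \<le> r - 2" for b
  proof (cases "b + 3 \<le> r")
    case True then show ?thesis using e_dg[of b] e_in[of b "{k..r-2}"] that assms by auto
  next
    case False
    then have "b = r - 2" using that by auto
    then have "ee r b \<circ> tvw r = dg (tt b)" using e_dg2 tvw_inv by (simp add: comp_assoc)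
    moreover have "ee r b \<in> G {k..r-2}" using that by (intro e_in) auto
    ultimately show ?thesis using tv Gcomp by metis
  qed
  have "dg \<sigma> \<in> G {k..r-2}"
  proof (rule perm_from_star[where F = dg and a = k and c = "r - 1"])
    show "dg id \<in> G {k..r-2}" by (simp add: dg_id gen.gid)
    show "\<And>b. k \<le> b \<Longrightarrow> b \<le> r - 1 \<Longrightarrow> dg (Transposition.transpose k b) \<in> G {k..r-2}"
    proof (rule star_chain)
      show "dg id \<in> G {k..r-2}" by (simp add: dg_id gen.gid)
      show "k < r - 1 \<Longrightarrow> dg (Transposition.transpose k (Suc k)) \<in> G {k..r-2}"
        using dgt[of k] assms by (simp add: tt_def)
      fix b assume b: "k < b" "b < r - 1" "dg (Transposition.transpose k b) \<in> G {k..r-2}"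
      have "dg (tt b) \<circ> dg (Transposition.transpose k b) \<circ> dg (tt b) = dg (Transposition.transpose k (Suc b))"
        using tt_conj[OF b(1)] by (simp add: dg_comp[symmetric])
      moreover have "dg (tt b) \<in> G {k..r-2}" using b by (intro dgt) auto
      ultimately show "dg (Transposition.transpose k (Suc b)) \<in> G {k..r-2}"
        using b(3) Gcomp by metis
    qed
  qed (use assms(3) in \<open>auto simp: Gcomp dg_comp\<close>)
  then show ?thesis using assms(4) tv Gcomp by auto
qed

end

context conc
begin

lemma G_fix_low: assumes "x \<in> G {k..j}" "i < k" shows "x (Inl i) = Inl i"
  using assms(1) by (rule gen_fix[rotated]) (use assms(2) in \<open>auto simp: ee_Inl\<close>)

lemma G_fix_low_r: assumes "x \<in> G {k..j}" "i < k" "2 \<le> k" shows "x (Inr i) = Inr i"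
  using assms(1) by (rule gen_fix[rotated]) (use assms(2,3) in \<open>auto simp: ee_Inr\<close>)

lemma G_fix_high: assumes "x \<in> G J" "r < i" shows "x (Inl i) = Inl i" "x (Inr i) = Inr i"
  using assms(1) by (rule gen_fix[rotated], use assms(2) in \<open>auto simp: ee_Inl ee_Inr\<close>)+

lemma G_th: assumes "x \<in> G {k..j}" "2 \<le> k" shows "x \<circ> th = th \<circ> x"
  using assms(1) by (rule gen_commute[rotated]) (use assms(2) e_th in auto)

lemma HA_low1:
  assumes m: "1 \<le> m" "m + 2 \<le> r" and x: "x \<in> G {..<m}" "x \<in> G {1..m}"
  shows "x \<in> G {1..<m}"
proof -
  have "{..<m} = {0..m-1}" using m by auto
  then have x0: "x \<in> G {0..m-1}" using x(1) by simp
  obtain \<alpha> z where az: "\<alpha> permutes {0..Suc (m-1)}" "z \<in> gen (ww r ` {2..m-1})" "x = vs \<alpha> \<circ> z"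
    using dec[OF _ _ x0] m by auto
  obtain \<beta> z' where bz: "\<beta> permutes {1..Suc m}" "z' \<in> gen (ww r ` {2..m})" "x = vs \<beta> \<circ> z'"
    using dec[OF _ _ x(2)] m by auto
  have "\<alpha> i = \<beta> i" for i
  proof (cases "i < r")
    case True
    have "x (Inl i) = Inl (\<alpha> i)" using az wfix[OF az(2) True] by (simp add: vs_def)
    moreover have "x (Inl i) = Inl (\<beta> i)" using bz wfix[OF bz(2) True] by (simp add: vs_def)
    ultimately show ?thesis by simp
  next
    case False
    then show ?thesis using permutes_not_in[OF az(1)] permutes_not_in[OF bz(1)] m by auto
  qed
  then have "\<alpha> = \<beta>" by auto
  then have "\<alpha> permutes {0..Suc (m-1)} \<inter> {1..Suc m}" using az(1) bz(1) permutes_Int by blast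
  moreover have "{0..Suc (m-1)} \<inter> {1..Suc m} = {1..m}" using m by auto
  ultimately have ap: "\<alpha> permutes {1..m}" by simp
  have v: "vs \<alpha> \<in> G {1..<m}" using vs_in[OF _ ap] m by auto
  have "z \<in> G {1..m-1}" using wing[of "m - 1"] az(2) m by auto
  moreover have "{1..m-1} = {1..<m}" using m by auto
  ultimately have "z \<in> G {1..<m}" by simp
  then show ?thesis using v az(3) Gcomp by simp
qed

lemma HA_low2:
  assumes m: "2 \<le> k" "k \<le> m" "m + 2 \<le> r" and x: "x \<in> G {..<m}" "x \<in> G {k..m}"
  shows "x \<in> G {k..<m}"
proof -
  have "{..<m} = {0..m-1}" using m by auto
  then have x0: "x \<in> G {0..m-1}" using x(1) by simp
  obtain \<alpha> z where az: "\<alpha> permutes {0..Suc (m-1)}" "z \<in> gen (ww r ` {2..m-1})" "x = vs \<alpha> \<circ> z"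
    using dec[OF _ _ x0] m by auto
  obtain \<sigma> T where sT: "\<sigma> permutes {k..Suc m}" "T = id \<or> T = tvw r" "x = dg \<sigma> \<circ> T"
    using ds[OF m(1) m(3) x(2)] by blast
  have a_r: "\<alpha> r = r" using permutes_not_in[OF az(1)] m by auto
  have "x (Inl r) = Inl r" using az wfix_r[OF az(2)] m a_r by (simp add: vs_def)
  moreover have "\<sigma> r = r" using permutes_not_in[OF sT(1)] m by auto
  ultimately have T: "T = id" using sT by (auto simp: tvw_def dg_def)
  have am: "\<alpha> (Suc m) = Suc m" using permutes_not_in[OF az(1)] m by auto
  have "x (Inl (Suc m)) = Inl (Suc m)" using az wfix[OF az(2), of "Suc m"] m am by (simp add: vs_def)
  then have sm: "\<sigma> (Suc m) = Suc m" using sT T by (simp add: dg_def)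
  have "\<sigma> permutes {k..m}"
    unfolding permutes_def
  proof (intro conjI allI impI)
    fix i assume "i \<notin> {k..m}"
    then show "\<sigma> i = i" using permutes_not_in[OF sT(1)] sm by (cases "i = Suc m") auto
  next
    fix y show "\<exists>!i. \<sigma> i = y" using sT(1) unfolding permutes_def by blast
  qed
  then have "dg \<sigma> \<in> G {k..<m}" using dg_in[of k m \<sigma>] m by auto
  then show ?thesis using sT(3) T by simp
qed

lemma dec_top:
  assumes "x \<in> G {..<r-1}"
  shows "\<exists>\<alpha> z. \<alpha> permutes {0..r-1} \<and> z \<in> gen (ww r ` {2..r-2}) \<and> x = vs \<alpha> \<circ> z"
proof -
  have "{..<r-1} = {0..r-2}" using r4 by auto
  then have "x \<in> G {0..r-2}" using assms by simp
  moreover have "Suc (r - 2) = r - 1" using r4 by auto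
  ultimately show ?thesis using dec[of 0 "r-2" x] r4 by auto
qed

lemma HA_top1: assumes "x \<in> G {..<r-1}" "x \<in> G {r-1..r-1}" shows "x \<in> G {r-1..<r-1}"
proof -
  obtain \<alpha> z where az: "\<alpha> permutes {0..r-1}" "z \<in> gen (ww r ` {2..r-2})" "x = vs \<alpha> \<circ> z"
    using dec_top[OF assms(1)] by blast
  have "x = id \<or> x = ee r (r-1)" using gen_single[OF ee_inv[OF r4]] assms(2) by simp
  moreover have "x (Inl (r - 1)) = Inl (\<alpha> (r - 1))" using az wfix[OF az(2), of "r-1"] r4 by (simp add: vs_def)
  moreover have "\<alpha> (r - 1) \<in> {0..r-1}" using permutes_in_image[OF az(1)] r4 by auto
  moreover have "ee r (r-1) (Inl (r - 1)) = Inl r" using r4 by (simp add: ee_Inl)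
  ultimately have "x = id" using r4 by auto
  then show ?thesis by (simp add: gen.gid)
qed

lemma HA_top2: assumes "x \<in> G {..<r-1}" "x \<in> G {r-2..r-1}" shows "x \<in> G {r-2..<r-1}"
proof -
  obtain \<alpha> z where az: "\<alpha> permutes {0..r-1}" "z \<in> gen (ww r ` {2..r-2})" "x = vs \<alpha> \<circ> z"
    using dec_top[OF assms(1)] by blast
  have hx: "x \<in> hexset r" using G_hex assms(2) by blast
  have inH: "x p \<in> H6 r" if "p = Inl (r-2) \<or> p = Inl (r-1)" for p
  proof -
    have "hadj r (Inl (r-2)) (Inl (r-1))" by (simp add: hadj_def)
    then have "hadj r (x (Inl (r-2))) (x (Inl (r-1)))" using hx unfolding hexset_def by blast
    then show ?thesis using that by (auto simp: hadj_def H6_def)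
  qed
  have inL: "x p \<in> Inl ` {0..r-1}" if pp: "p = Inl (r-2) \<or> p = Inl (r-1)" for p
  proof -
    obtain i where i: "p = Inl i" "i < r" using pp r4 by auto
    have "x p = Inl (\<alpha> i)" using az wfix[OF az(2) i(2)] i by (simp add: vs_def)
    moreover have "\<alpha> i \<in> {0..r-1}" using permutes_in_image[OF az(1)] i by auto
    ultimately show ?thesis by simp
  qed
  have cap: "H6 r \<inter> Inl ` {0..r-1} = {Inl (r - 2), Inl (r - 1)}" using r4 by (auto simp: H6_def)
  have "x = id \<or> x = ee r (r - 2)"
    using hex_final[OF hx] inH inL cap by blast
  moreover have "ee r (r - 2) \<in> G {r-2..<r-1}" using r4 by (intro e_in) auto
  ultimately show ?thesis by (auto simp: gen.gid)
qed

lemma HA_top4: assumes "x \<in> G {..<r-1}" "x \<in> G {1..r-1}" shows "x \<in> G {1..<r-1}"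
proof -
  obtain \<alpha> z where az: "\<alpha> permutes {0..r-1}" "z \<in> gen (ww r ` {2..r-2})" "x = vs \<alpha> \<circ> z"
    using dec_top[OF assms(1)] by blast
  have "x (Inl 0) = Inl 0" using G_fix_low[OF assms(2)] by simp
  moreover have "x (Inl 0) = Inl (\<alpha> 0)" using az wfix[OF az(2), of 0] r4 by (simp add: vs_def)
  ultimately have a0: "\<alpha> 0 = 0" by simp
  have "\<alpha> permutes {1..r-1}"
    unfolding permutes_def
  proof (intro conjI allI impI)
    fix i assume "i \<notin> {1..r-1}"
    then show "\<alpha> i = i" using permutes_not_in[OF az(1)] a0 by (cases "i = 0") auto
  next
    fix y show "\<exists>!i. \<alpha> i = y" using az(1) unfolding permutes_def by blast
  qed
  then have v: "vs \<alpha> \<in> G {1..<r-1}" using vs_in by auto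
  have w: "gen (ww r ` {2..r-2}) \<subseteq> G {1..r-2}" by (rule wing) (use r4 in auto)
  have "z \<in> G {1..r-2}" using w az(2) by blast
  moreover have "{1..r-2} = {1..<r-1}" using r4 by auto
  ultimately have "z \<in> G {1..<r-1}" by simp
  then show ?thesis using v az(3) Gcomp by simp
qed

lemma HA_top3:
  assumes k: "2 \<le> k" "k + 3 \<le> r" and x: "x \<in> G {..<r-1}" "x \<in> G {k..r-1}"
  shows "x \<in> G {k..<r-1}"
proof -
  obtain \<alpha> z where az: "\<alpha> permutes {0..r-1}" "z \<in> gen (ww r ` {2..r-2})" "x = vs \<alpha> \<circ> z"
    using dec_top[OF x(1)] by blast
  have xl: "x (Inl i) = Inl (\<alpha> i)" if "i < r" for i using az wfix[OF az(2) that] by (simp add: vs_def)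
  have lowfix: "\<alpha> i = i" if "i < k" for i
  proof -
    have "x (Inl i) = Inl i" using G_fix_low[OF x(2) that] .
    then show ?thesis using xl[of i] that k by simp
  qed
  have ap: "\<alpha> permutes {k..r-1}"
    unfolding permutes_def
  proof (intro conjI allI impI)
    fix i assume "i \<notin> {k..r-1}"
    then show "\<alpha> i = i" using permutes_not_in[OF az(1)] lowfix by (cases "i < k") auto
  next
    fix y show "\<exists>!i. \<alpha> i = y" using az(1) unfolding permutes_def by blast
  qed
  have ath: "x \<circ> th = th \<circ> x" using G_th[OF x(2) k(1)] .
  have a2: "2 \<le> \<alpha> i" if "2 \<le> i" for i
  proof (cases "i \<in> {k..r-1}")
    case True
    then have "\<alpha> i \<in> {k..r-1}" using permutes_in_image[OF ap] by blast
    then show ?thesis using k by auto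
  next
    case False then show ?thesis using permutes_not_in[OF ap] that by auto
  qed
  have eq: "x p = dg \<alpha> p" if "p \<noteq> Inl r" "p \<noteq> Inr r" for p
  proof (cases p)
    case (Inl i)
    show ?thesis
    proof (cases "i < r")
      case True then show ?thesis using xl Inl by (simp add: dg_def)
    next
      case False
      then have "r < i" using that Inl by auto
      moreover have "\<alpha> i = i" using permutes_not_in[OF ap] \<open>r < i\<close> k by auto
      ultimately show ?thesis using G_fix_high(1)[OF x(2)] Inl by (auto simp: dg_def)
    qed
  next
    case (Inr i)
    show ?thesis
    proof (cases "i < 2")
      case True
      then show ?thesis using G_fix_low_r[OF x(2) _ k(1)] Inr permutes_not_in[OF ap] k by (auto simp: dg_def)
    next
      case False
      show ?thesis
      proof (cases "i < r")
        case True
        have "x (th (Inl i)) = th (x (Inl i))" using ath by (metis comp_apply)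
        then have "x (Inr i) = th (Inl (\<alpha> i))" using False xl[OF True] by (simp add: th_def)
        then show ?thesis using a2[of i] False Inr by (simp add: th_def dg_def)
      next
        case False
        then have "r < i" using that Inr by auto
        moreover have "\<alpha> i = i" using permutes_not_in[OF ap] \<open>r < i\<close> k by auto
        ultimately show ?thesis using G_fix_high(2)[OF x(2)] Inr by (auto simp: dg_def)
      qed
    qed
  qed
  define u where "u = dg (Hilbert_Choice.inv \<alpha>) \<circ> x"
  have inva: "\<alpha> \<circ> Hilbert_Choice.inv \<alpha> = id" "Hilbert_Choice.inv \<alpha> \<circ> \<alpha> = id"
    using permutes_inv_o[OF ap] by auto
  have dgi: "dg \<alpha> \<circ> dg (Hilbert_Choice.inv \<alpha>) = id" "dg (Hilbert_Choice.inv \<alpha>) \<circ> dg \<alpha> = id"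
    using inva by (simp_all add: dg_comp[symmetric] dg_id)
  have xu: "x = dg \<alpha> \<circ> u" unfolding u_def using dgi by (simp add: o_assoc)
  have ufix: "u p = p" if "p \<noteq> Inl r" "p \<noteq> Inr r" for p
  proof -
    have "u p = dg (Hilbert_Choice.inv \<alpha>) (dg \<alpha> p)" using eq[OF that] u_def by simp
    also have "\<dots> = p" using dgi(2) by (metis comp_apply id_apply)
    finally show ?thesis .
  qed
  have "inj x" using gen_bij[OF _ x(2)] ee_inv[OF r4] bij_is_inj by blast
  moreover have "inj (dg (Hilbert_Choice.inv \<alpha>))" using dgi by (metis inj_on_id inj_on_imageI2 o_bij bij_is_inj)
  ultimately have "inj u" unfolding u_def by (rule inj_compose[rotated])
  then have "u = id \<or> u = tvw r" using two_point[of u "Inl r" "Inr r"] ufix by (simp add: tvw_def)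
  then have "dg \<alpha> \<circ> u \<in> G {k..r-2}" using dg_in2[OF k ap] by blast
  moreover have "{k..r-2} = {k..<r-1}" using r4 by auto
  ultimately show ?thesis using xu by simp
qed

lemma HA: assumes "m < r" "k \<le> m" shows "G {..<m} \<inter> G {k..m} \<subseteq> G {k..<m}"
proof
  fix x assume x: "x \<in> G {..<m} \<inter> G {k..m}"
  show "x \<in> G {k..<m}"
  proof (cases "k = 0")
    case True
    then have "{k..<m} = {..<m}" by auto
    then show ?thesis using x by simp
  next
    case k0: False
    show ?thesis
    proof (cases "m + 2 \<le> r")
      case True
      show ?thesis
      proof (cases "k = 1")
        case True then show ?thesis using HA_low1[of m x] x assms \<open>m + 2 \<le> r\<close> by auto
      next
        case False then show ?thesis using HA_low2[of k m x] x assms \<open>m + 2 \<le> r\<close> k0 by auto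
      qed
    next
      case False
      then have mr: "m = r - 1" using assms by auto
      consider "k = r - 1" | "k = r - 2" | "k = 1" | "2 \<le> k \<and> k + 3 \<le> r" using assms mr k0 by linarith
      then show ?thesis
      proof cases
        case 1 then show ?thesis using HA_top1 x mr by auto
      next
        case 2 then show ?thesis using HA_top2[of x] x mr r4 by (auto simp: Suc_diff_Suc)
      next
        case 3 then show ?thesis using HA_top4 x mr by auto
      next
        case 4 then show ?thesis using HA_top3[of k x] x mr by auto
      qed
    qed
  qed
qed

theorem IP: "I \<subseteq> {..<r} \<Longrightarrow> J \<subseteq> {..<r} \<Longrightarrow> G I \<inter> G J \<subseteq> G (I \<inter> J)"
  using IP_all[of r] HA by blast

end

lemma bij_iso:
  assumes b: "bij_betw \<beta> V {1..n}"
  shows "BijGroup V \<cong> sym_group n"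
proof -
  define \<gamma> where "\<gamma> = inv_into V \<beta>"
  have g: "bij_betw \<gamma> {1..n} V" unfolding \<gamma>_def by (rule bij_betw_inv_into[OF b])
  have gb: "\<gamma> (\<beta> x) = x" if "x \<in> V" for x
    unfolding \<gamma>_def using b that by (simp add: bij_betw_def inv_into_f_f)
  have bg: "\<beta> (\<gamma> k) = k" if "k \<in> {1..n}" for k
    unfolding \<gamma>_def using b that by (simp add: bij_betw_def f_inv_into_f)
  have bV: "\<beta> x \<in> {1..n}" if "x \<in> V" for x using b that by (auto simp: bij_betw_def)
  have gV: "\<gamma> k \<in> V" if "k \<in> {1..n}" for k using g that by (auto simp: bij_betw_def)
  define \<Phi> where "\<Phi> f = (\<lambda>k. if k \<in> {1..n} then \<beta> (f (\<gamma> k)) else k)" for f :: "'a \<Rightarrow> 'a"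
  have fV: "f x \<in> V" if "f \<in> Bij V" "x \<in> V" for f x
    using that by (auto simp: Bij_def bij_betw_def)
  have perm: "\<Phi> f permutes {1..n}" if f: "f \<in> Bij V" for f
  proof (rule bij_imp_permutes)
    have "bij_betw (\<beta> \<circ> f \<circ> \<gamma>) {1..n} {1..n}"
      using f g b by (auto simp: Bij_def intro: bij_betw_trans)
    moreover have "\<And>k. k \<in> {1..n} \<Longrightarrow> (\<beta> \<circ> f \<circ> \<gamma>) k = \<Phi> f k" by (simp add: \<Phi>_def)
    ultimately show "bij_betw (\<Phi> f) {1..n} {1..n}" using bij_betw_cong by blast
    show "\<And>x. x \<notin> {1..n} \<Longrightarrow> \<Phi> f x = x" unfolding \<Phi>_def by (simp only: if_False)
  qed
  have hom: "\<Phi> \<in> hom (BijGroup V) (sym_group n)"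
  proof (rule homI)
    fix f assume "f \<in> carrier (BijGroup V)"
    then show "\<Phi> f \<in> carrier (sym_group n)" using perm by (simp add: BijGroup_def sym_group_def)
  next
    fix f h assume fh: "f \<in> carrier (BijGroup V)" "h \<in> carrier (BijGroup V)"
    then have fh': "f \<in> Bij V" "h \<in> Bij V" by (auto simp: BijGroup_def)
    have "f \<otimes>\<^bsub>BijGroup V\<^esub> h = compose V f h" using fh' by (simp add: BijGroup_def)
    moreover have "\<Phi> (compose V f h) = \<Phi> f \<circ> \<Phi> h"
    proof
      fix k show "\<Phi> (compose V f h) k = (\<Phi> f \<circ> \<Phi> h) k"
      proof (cases "k \<in> {1..n}")
        case True
        have hv: "h (\<gamma> k) \<in> V" using fV[OF fh'(2) gV[OF True]] .
        have b1: "\<beta> (h (\<gamma> k)) \<in> {1..n}" by (rule bV[OF hv])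
        have e1: "\<Phi> h k = \<beta> (h (\<gamma> k))" unfolding \<Phi>_def if_P[OF True] ..
        have e2: "\<Phi> f (\<beta> (h (\<gamma> k))) = \<beta> (f (h (\<gamma> k)))"
          unfolding \<Phi>_def if_P[OF b1] gb[OF hv] ..
        have e3: "\<Phi> (compose V f h) k = \<beta> (f (h (\<gamma> k)))"
          unfolding \<Phi>_def if_P[OF True] compose_def using gV[OF True] by simp
        show ?thesis using e1 e2 e3 by simp
      next
        case False then show ?thesis unfolding \<Phi>_def comp_def if_not_P[OF False] by simp
      qed
    qed
    ultimately show "\<Phi> (f \<otimes>\<^bsub>BijGroup V\<^esub> h) = \<Phi> f \<otimes>\<^bsub>sym_group n\<^esub> \<Phi> h"
      by (simp add: sym_group_def)
  qed
  have "bij_betw \<Phi> (Bij V) {p. p permutes {1..n}}"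
  proof (rule bij_betwI')
    fix f h assume fh: "f \<in> Bij V" "h \<in> Bij V"
    show "(\<Phi> f = \<Phi> h) = (f = h)"
    proof
      assume eq: "\<Phi> f = \<Phi> h"
      show "f = h"
      proof (rule extensionalityI[of _ V])
        show "f \<in> extensional V" "h \<in> extensional V" using fh by (auto simp: Bij_def)
        fix x assume x: "x \<in> V"
        have "\<Phi> f (\<beta> x) = \<Phi> h (\<beta> x)" using eq by simp
        then have "\<beta> (f x) = \<beta> (h x)" unfolding \<Phi>_def if_P[OF bV[OF x]] gb[OF x] .
        then show "f x = h x" using b fV[OF fh(1) x] fV[OF fh(2) x] by (auto simp: bij_betw_def inj_on_def)
      qed
    qed simp
  next
    fix f assume "f \<in> Bij V" then show "\<Phi> f \<in> {p. p permutes {1..n}}" using perm by simp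
  next
    fix p assume "p \<in> {p. p permutes {1..n}}"
    then have p: "p permutes {1..n}" by simp
    define f where "f = restrict (\<gamma> \<circ> p \<circ> \<beta>) V"
    have "bij_betw (\<gamma> \<circ> p \<circ> \<beta>) V V"
      using g b permutes_imp_bij[OF p] by (auto intro: bij_betw_trans)
    then have fB: "f \<in> Bij V" unfolding f_def Bij_def by simp
    have "\<Phi> f = p"
    proof
      fix k show "\<Phi> f k = p k"
      proof (cases "k \<in> {1..n}")
        case True
        have pk: "p k \<in> {1..n}" using permutes_in_image[OF p] True by simp
        have "\<Phi> f k = \<beta> (f (\<gamma> k))" unfolding \<Phi>_def if_P[OF True] ..
        also have "\<dots> = \<beta> (\<gamma> (p (\<beta> (\<gamma> k))))" using gV[OF True] by (simp add: f_def)
        also have "\<dots> = p k" using bg[OF True] bg[OF pk] by simp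
        finally show ?thesis .
      next
        case False then show ?thesis using permutes_not_in[OF p] unfolding \<Phi>_def if_not_P[OF False] by simp
      qed
    qed
    then show "\<exists>f\<in>Bij V. p = \<Phi> f" using fB by metis
  qed
  then have "bij_betw \<Phi> (carrier (BijGroup V)) (carrier (sym_group n))"
    by (simp add: BijGroup_def sym_group_def)
  then show ?thesis using hom by (intro is_isoI isoI)
qed

lemma restrict_Bij: "p permutes V \<Longrightarrow> restrict p V \<in> Bij V"
  unfolding Bij_def using permutes_imp_bij by fastforce

lemma restrict_mult: assumes "a permutes V" "b permutes V"
  shows "restrict a V \<otimes>\<^bsub>BijGroup V\<^esub> restrict b V = restrict (a \<circ> b) V"
proof -
  have "restrict a V \<otimes>\<^bsub>BijGroup V\<^esub> restrict b V = compose V (restrict a V) (restrict b V)"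
    using restrict_Bij[OF assms(1)] restrict_Bij[OF assms(2)] by (simp add: BijGroup_def)
  also have "\<dots> = restrict (a \<circ> b) V"
  proof
    fix x show "compose V (restrict a V) (restrict b V) x = restrict (a \<circ> b) V x"
      using permutes_in_image[OF assms(2)] by (simp add: compose_def)
  qed
  finally show ?thesis .
qed

lemma restrict_one: "\<one>\<^bsub>BijGroup V\<^esub> = restrict id V"
  by (simp add: BijGroup_def restrict_def fun_eq_iff)

lemma restrict_inj: "p permutes V \<Longrightarrow> q permutes V \<Longrightarrow> restrict p V = restrict q V \<Longrightarrow> p = q"
proof
  fix x assume pq: "p permutes V" "q permutes V" "restrict p V = restrict q V"
  show "p x = q x"
  proof (cases "x \<in> V")
    case True then show ?thesis using pq(3) by (metis restrict_apply')
  next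
    case False then show ?thesis using permutes_not_in[OF pq(1)] permutes_not_in[OF pq(2)] by simp
  qed
qed

lemma gen_transfer:
  assumes S: "\<And>s. s \<in> S \<Longrightarrow> s permutes V" "\<And>s. s \<in> S \<Longrightarrow> s \<circ> s = id"
  shows "generate (BijGroup V) ((\<lambda>f. restrict f V) ` S) = (\<lambda>f. restrict f V) ` gen S"
proof
  have gp: "g \<in> gen S \<Longrightarrow> g permutes V" for g using gen_permutes S(1) by blast
  show "generate (BijGroup V) ((\<lambda>f. restrict f V) ` S) \<subseteq> (\<lambda>f. restrict f V) ` gen S"
  proof
    fix h assume "h \<in> generate (BijGroup V) ((\<lambda>f. restrict f V) ` S)"
    then show "h \<in> (\<lambda>f. restrict f V) ` gen S"
    proof induction
      case one then show ?case using gen.gid by (auto simp: restrict_one)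
    next
      case (incl h)
      then obtain s where "s \<in> S" "h = restrict s V" by blast
      then show ?case using gen_incl by blast
    next
      case (inv h)
      then obtain s where s: "s \<in> S" "h = restrict s V" by blast
      have hc: "h \<in> carrier (BijGroup V)" using s restrict_Bij[OF S(1)[OF s(1)]] by (simp add: BijGroup_def)
      have "h \<otimes>\<^bsub>BijGroup V\<^esub> h = \<one>\<^bsub>BijGroup V\<^esub>"
        using s restrict_mult[OF S(1) S(1), of s s] S(2)[of s] by (simp add: restrict_one)
      then have "inv\<^bsub>BijGroup V\<^esub> h = h" using group.inv_equality[OF group_BijGroup] hc by blast
      then show ?case using s gen_incl by auto
    next
      case (eng h1 h2)
      then obtain a b where ab: "a \<in> gen S" "b \<in> gen S" "h1 = restrict a V" "h2 = restrict b V" by blast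
      then have "h1 \<otimes>\<^bsub>BijGroup V\<^esub> h2 = restrict (a \<circ> b) V" using restrict_mult gp by blast
      then show ?case using gen_comp[OF ab(1,2)] by blast
    qed
  qed
  show "(\<lambda>f. restrict f V) ` gen S \<subseteq> generate (BijGroup V) ((\<lambda>f. restrict f V) ` S)"
  proof
    fix h assume "h \<in> (\<lambda>f. restrict f V) ` gen S"
    then obtain g where g: "g \<in> gen S" "h = restrict g V" by blast
    have "restrict g V \<in> generate (BijGroup V) ((\<lambda>f. restrict f V) ` S)" using g(1)
    proof induction
      case gid show ?case using generate.one[of "BijGroup V" "(\<lambda>f. restrict f V) ` S"] unfolding restrict_one .
    next
      case (gstep s g)
      have eq: "restrict (s \<circ> g) V = restrict s V \<otimes>\<^bsub>BijGroup V\<^esub> restrict g V"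
        using restrict_mult[OF S(1)[OF gstep(1)] gp[OF gstep(2)]] by simp
      have "restrict s V \<in> (\<lambda>f. restrict f V) ` S" by (rule imageI[OF gstep(1)])
      then show ?case unfolding eq by (rule generate.eng[OF generate.incl gstep(3)])
    qed
    then show "h \<in> generate (BijGroup V) ((\<lambda>f. restrict f V) ` S)" using g by simp
  qed
qed

context conc
begin

lemma e_perm_V: "ee r k permutes vertsP r"
  unfolding permutes_def
proof (intro conjI allI impI)
  fix x assume "x \<notin> vertsP r"
  then show "ee r k x = x" by (cases x) (auto simp: vertsP_def ee_Inl ee_Inr)
next
  fix y
  have ii: "ee r k (ee r k z) = z" for z using ee_inv[OF r4, of k] by (metis comp_apply id_apply)
  show "\<exists>!x. ee r k x = y"
    by (rule ex1I[of _ "ee r k y"]) (use ii in metis)+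
qed

lemma G_perm_V: "x \<in> G J \<Longrightarrow> x permutes vertsP r"
  using gen_permutes[of "ee r ` J" "vertsP r" x] e_perm_V by blast

lemma conjT: assumes "g \<in> G J" "g \<circ> g = id" "g (Inl 0) = Inl 0" "Transposition.transpose (Inl 0) y \<in> G J"
  shows "Transposition.transpose (Inl 0) (g y) \<in> G J"
proof -
  have "g \<circ> Transposition.transpose (Inl 0) y \<circ> g = Transposition.transpose (Inl 0) (g y)"
    using conj_transpose[OF assms(2)] assms(3) by simp
  then show ?thesis using assms(1,4) Gcomp by metis
qed

lemma gen_all: assumes p: "p permutes vertsP r" shows "p \<in> G {..<r}"
proof -
  let ?C = "G {..<r}"
  let ?T = "\<lambda>y. Transposition.transpose (Inl 0 :: nat + nat) y"
  have einv: "\<And>k. ee r k \<circ> ee r k = id" using ee_inv[OF r4] .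
  have ein: "\<And>k. k < r \<Longrightarrow> ee r k \<in> ?C" by (intro e_in) auto
  have up: "?T (Inl i) \<in> ?C" if "1 \<le> i" "i \<le> r" for i
    using that
  proof (induction i)
    case 0 then show ?case by simp
  next
    case (Suc n)
    show ?case
    proof (cases "n = 0")
      case True
      have "ee r 0 = ?T (Inl 1)" using e_small[of 0] by (simp add: tt_def vs_transpose)
      then show ?thesis using ein[of 0] r4 True by simp
    next
      case False
      then have IH: "?T (Inl n) \<in> ?C" using Suc by simp
      have a: "ee r n (Inl 0) = Inl 0" "ee r n (Inl n) = Inl (Suc n)" using Suc False r4 by (auto simp: ee_Inl)
      have "n < r" using Suc by simp
      have "?T (ee r n (Inl n)) \<in> ?C" using conjT[OF ein[OF \<open>n < r\<close>] einv a(1) IH] .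
      then show ?thesis using a by simp
    qed
  qed
  have tr: "?T (Inr r) \<in> ?C"
  proof -
    have a: "ee r (r-2) (Inl 0) = Inl 0" "ee r (r-2) (Inl r) = Inr r" using r4 by (auto simp: ee_Inl)
    have "r - 2 < r" using r4 by simp
    have "?T (ee r (r-2) (Inl r)) \<in> ?C" using conjT[OF ein[OF \<open>r - 2 < r\<close>] einv a(1) up[of r]] r4 by simp
    then show ?thesis using a by simp
  qed
  have tr1: "?T (Inr (r-1)) \<in> ?C"
  proof -
    have a: "ee r (r-1) (Inl 0) = Inl 0" "ee r (r-1) (Inr r) = Inr (r - 1)" using r4 by (auto simp: ee_Inl ee_Inr)
    have "r - 1 < r" using r4 by simp
    have "?T (ee r (r-1) (Inr r)) \<in> ?C" using conjT[OF ein[OF \<open>r - 1 < r\<close>] einv a(1) tr] .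
    then show ?thesis using a by simp
  qed
  have down0: "?T (Inr (r - 1 - d)) \<in> ?C" if "d \<le> r - 3" for d
    using that
  proof (induction d)
    case 0 then show ?case using tr1 by simp
  next
    case (Suc d)
    define n where "n = r - 1 - Suc d"
    have n: "2 \<le> n" "n < r" "Suc n = r - 1 - d" using Suc r4 unfolding n_def by auto
    have IH: "?T (Inr (Suc n)) \<in> ?C" using Suc n by simp
    have a: "ee r n (Inl 0) = Inl 0" "ee r n (Inr (Suc n)) = Inr n" using n r4 by (auto simp: ee_Inl ee_Inr)
    have "?T (ee r n (Inr (Suc n))) \<in> ?C" using conjT[OF ein[OF n(2)] einv a(1) IH] .
    then show ?case using a n_def by simp
  qed
  have down: "?T (Inr j) \<in> ?C" if "2 \<le> j" "j \<le> r - 1" for j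
    using down0[of "r - 1 - j"] that by simp
  have star: "?T y \<in> ?C" if yV: "y \<in> vertsP r" for y
  proof -
    consider i where "y = Inl i" "i \<le> r" | j where "y = Inr j" "2 \<le> j" "j \<le> r" using yV
      by (auto simp: vertsP_def)
    then show ?thesis
    proof cases
      case 1 then show ?thesis using up[of i] gen.gid by (cases "i = 0") auto
    next
      case 2 then show ?thesis using down[of j] tr by (cases "j = r") auto
    qed
  qed
  have all: "Transposition.transpose a b \<in> ?C" if "a \<in> vertsP r" "b \<in> vertsP r" for a b
  proof (cases "a = Inl 0 \<or> b = Inl 0 \<or> a = b")
    case True
    then consider "a = Inl 0" | "b = Inl 0" | "a = b" by blast
    then show ?thesis
    proof cases
      case 1 then show ?thesis using star that by simp
    next
      case 2 then show ?thesis using star[of a] that by (simp add: transpose_commute)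
    next
      case 3 then show ?thesis by (metis gen.gid transpose_same)
    qed
  next
    case False
    then have "Transposition.transpose a (Inl 0) \<circ> Transposition.transpose (Inl 0) b \<circ> Transposition.transpose a (Inl 0)
       = Transposition.transpose a b" by (intro transpose_comp_triple) auto
    then have "Transposition.transpose a b = ?T a \<circ> ?T b \<circ> ?T a" by (metis transpose_commute)
    then show ?thesis using star that Gcomp by metis
  qed
  have fin: "finite (vertsP r)" by (simp add: vertsP_def)
  show ?thesis using p fin
  proof (induction rule: permutes_induct)
    case id then show ?case by (rule gen.gid)
  next
    case (swap a b p)
    have "Transposition.transpose a b \<in> ?C" using all swap(1,2) by blast
    then show ?case using Gcomp swap(5) by blast
  qed
qed

end

definition bb :: "nat \<Rightarrow> nat + nat \<Rightarrow> nat" where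
  "bb r x = (case x of Inl i \<Rightarrow> Suc i | Inr i \<Rightarrow> r + i)"

lemma bb_bij: assumes "1 \<le> r" shows "bij_betw (bb r) (vertsP r) {1..2 * r}"
proof (rule bij_betw_imageI)
  show "inj_on (bb r) (vertsP r)"
  proof (rule inj_onI)
    fix x y assume "x \<in> vertsP r" "y \<in> vertsP r" "bb r x = bb r y"
    then show "x = y" by (cases x; cases y) (auto simp: vertsP_def bb_def)
  qed
  show "bb r ` vertsP r = {1..2 * r}"
  proof
    show "bb r ` vertsP r \<subseteq> {1..2 * r}" using assms by (auto simp: vertsP_def bb_def)
    show "{1..2 * r} \<subseteq> bb r ` vertsP r"
    proof
      fix k assume k: "k \<in> {1..2 * r}"
      show "k \<in> bb r ` vertsP r"
      proof (cases "k \<le> Suc r")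
        case True
        then have "k = bb r (Inl (k - 1))" "Inl (k - 1) \<in> vertsP r" using k by (auto simp: bb_def vertsP_def)
        then show ?thesis by blast
      next
        case False
        then have "k - r \<in> {2..r}" using k by auto
        then have "k = bb r (Inr (k - r))" "Inr (k - r) \<in> vertsP r" using False by (auto simp: bb_def vertsP_def)
        then show ?thesis by blast
      qed
    qed
  qed
qed

context conc
begin

abbreviation "VV \<equiv> vertsP r"
abbreviation "BB \<equiv> BijGroup (vertsP r)"

lemma rho_eq: "k < r \<Longrightarrow> rhoP r k = restrict (ee r k) VV"
  by (simp add: rhoP_def edge_perm_ee r4)

lemma gen_rho: assumes "J \<subseteq> {..<r}"
  shows "generate BB (rhoP r ` J) = (\<lambda>f. restrict f VV) ` G J"
proof -
  have "rhoP r ` J = (\<lambda>k. restrict (ee r k) VV) ` J" using rho_eq assms by (intro image_cong) auto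
  also have "\<dots> = (\<lambda>f. restrict f VV) ` (ee r ` J)" by (simp add: image_image)
  finally have "rhoP r ` J = (\<lambda>f. restrict f VV) ` (ee r ` J)" .
  moreover have "generate BB ((\<lambda>f. restrict f VV) ` (ee r ` J)) = (\<lambda>f. restrict f VV) ` G J"
    by (rule gen_transfer) (auto intro: e_perm_V ee_inv r4)
  ultimately show ?thesis by simp
qed

lemma gen_full: "generate BB (rhoP r ` {..<r}) = carrier BB"
proof -
  have "(\<lambda>f. restrict f VV) ` G {..<r} = Bij VV"
  proof
    show "(\<lambda>f. restrict f VV) ` G {..<r} \<subseteq> Bij VV" using restrict_Bij G_perm_V by blast
    show "Bij VV \<subseteq> (\<lambda>f. restrict f VV) ` G {..<r}"
    proof
      fix f assume f: "f \<in> Bij VV"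
      define p where "p x = (if x \<in> VV then f x else x)" for x
      have "bij_betw f VV VV" using f by (simp add: Bij_def)
      then have "bij_betw p VV VV" by (rule bij_betw_cong[THEN iffD1, rotated]) (simp add: p_def)
      then have pp: "p permutes VV" by (rule bij_imp_permutes) (simp add: p_def)
      have "restrict p VV = f"
        using f by (intro extensionalityI[of _ VV]) (auto simp: Bij_def p_def)
      then show "f \<in> (\<lambda>f. restrict f VV) ` G {..<r}" using gen_all[OF pp] by blast
    qed
  qed
  then show ?thesis using gen_rho[of "{..<r}"] by (simp add: BijGroup_def)
qed

lemma rho_car: "k < r \<Longrightarrow> rhoP r k \<in> carrier BB"
  using rho_eq restrict_Bij[OF e_perm_V] by (simp add: BijGroup_def)

lemma sgB: "subgroup_generated BB (rhoP r ` {..<r}) = BB"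
proof -
  have "carrier BB \<inter> rhoP r ` {..<r} = rhoP r ` {..<r}" using rho_car by blast
  then show ?thesis unfolding subgroup_generated_def using gen_full by simp
qed

lemma string: "string_C_group BB r (rhoP r)"
proof -
  have mult: "restrict a VV \<otimes>\<^bsub>BB\<^esub> restrict b VV = restrict (a \<circ> b) VV"
    if "a permutes VV" "b permutes VV" for a b using restrict_mult that by blast
  have invo: "rhoP r i \<otimes>\<^bsub>BB\<^esub> rhoP r i = \<one>\<^bsub>BB\<^esub>" if "i < r" for i
    using rho_eq[OF that] mult[OF e_perm_V e_perm_V, of i i] ee_inv[OF r4, of i] by (simp add: restrict_one)
  have ne: "rhoP r i \<noteq> \<one>\<^bsub>BB\<^esub>" if "i < r" for i
  proof
    assume "rhoP r i = \<one>\<^bsub>BB\<^esub>"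
    then have "restrict (ee r i) VV (Inl i) = restrict id VV (Inl i)" using rho_eq[OF that] by (simp add: restrict_one)
    moreover have "Inl i \<in> VV" using that by (simp add: vertsP_def)
    ultimately show False using that by (simp add: ee_Inl)
  qed
  have comm: "(rhoP r i \<otimes>\<^bsub>BB\<^esub> rhoP r j) [^]\<^bsub>BB\<^esub> (2::nat) = \<one>\<^bsub>BB\<^esub>"
    if "i < r" "j < r" "i + 2 \<le> j \<or> j + 2 \<le> i" for i j
  proof -
    have c: "ee r i \<circ> ee r j = ee r j \<circ> ee r i" using that ee_comm[OF r4] by metis
    have pij: "ee r i \<circ> ee r j permutes VV" using e_perm_V permutes_compose by blast
    have x: "rhoP r i \<otimes>\<^bsub>BB\<^esub> rhoP r j = restrict (ee r i \<circ> ee r j) VV"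
      using rho_eq that mult[OF e_perm_V e_perm_V] by simp
    have xc: "restrict (ee r i \<circ> ee r j) VV \<in> carrier BB" using restrict_Bij[OF pij] by (simp add: BijGroup_def)
    have "(ee r i \<circ> ee r j) \<circ> (ee r i \<circ> ee r j) = (ee r i \<circ> ee r i) \<circ> (ee r j \<circ> ee r j)"
      by (metis c comp_assoc)
    also have "\<dots> = id" using ee_inv[OF r4] by simp
    finally have sq: "(ee r i \<circ> ee r j) \<circ> (ee r i \<circ> ee r j) = id" .
    have "(restrict (ee r i \<circ> ee r j) VV) [^]\<^bsub>BB\<^esub> (2::nat)
        = restrict (ee r i \<circ> ee r j) VV \<otimes>\<^bsub>BB\<^esub> restrict (ee r i \<circ> ee r j) VV"
      using monoid.l_one[OF group.is_monoid[OF group_BijGroup] xc] by (simp add: numeral_2_eq_2)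
    also have "\<dots> = \<one>\<^bsub>BB\<^esub>" using mult[OF pij pij] sq by (simp add: restrict_one)
    finally show ?thesis using x by simp
  qed
  have IPB: "generate BB (rhoP r ` J) \<inter> generate BB (rhoP r ` K) = generate BB (rhoP r ` (J \<inter> K))"
    if "J \<subseteq> {..<r}" "K \<subseteq> {..<r}" for J K
  proof -
    have JK: "J \<inter> K \<subseteq> {..<r}" using that by auto
    have "(\<lambda>f. restrict f VV) ` G J \<inter> (\<lambda>f. restrict f VV) ` G K = (\<lambda>f. restrict f VV) ` G (J \<inter> K)"
    proof
      show "(\<lambda>f. restrict f VV) ` G J \<inter> (\<lambda>f. restrict f VV) ` G K \<subseteq> (\<lambda>f. restrict f VV) ` G (J \<inter> K)"
      proof
        fix h assume "h \<in> (\<lambda>f. restrict f VV) ` G J \<inter> (\<lambda>f. restrict f VV) ` G K"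
        then obtain a b where ab: "a \<in> G J" "b \<in> G K" "h = restrict a VV" "h = restrict b VV" by blast
        then have "a = b" using restrict_inj G_perm_V by metis
        then have "a \<in> G (J \<inter> K)" using IP[OF that] ab by blast
        then show "h \<in> (\<lambda>f. restrict f VV) ` G (J \<inter> K)" using ab by blast
      qed
      show "(\<lambda>f. restrict f VV) ` G (J \<inter> K) \<subseteq> (\<lambda>f. restrict f VV) ` G J \<inter> (\<lambda>f. restrict f VV) ` G K"
        using Gmono[of "J \<inter> K" J] Gmono[of "J \<inter> K" K] by blast
    qed
    then show ?thesis using gen_rho that JK by simp
  qed
  show ?thesis unfolding string_C_group_def sggi_def
    using group_BijGroup rho_car invo ne gen_full comm IPB by blast
qed

end

theorem proposition3p8:
  fixes n :: nat
  assumes "even n" and "n \<ge> 8"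
  shows "card (vertsP (n div 2)) = n
     \<and> carrier (subgroup_generated (BijGroup (vertsP (n div 2))) (rhoP (n div 2) ` {..<n div 2}))
         = carrier (BijGroup (vertsP (n div 2)))
     \<and> subgroup_generated (BijGroup (vertsP (n div 2))) (rhoP (n div 2) ` {..<n div 2})
         \<cong> sym_group n
     \<and> string_C_group
         (subgroup_generated (BijGroup (vertsP (n div 2))) (rhoP (n div 2) ` {..<n div 2}))
         (n div 2) (rhoP (n div 2))"
proof -
  define r where "r = n div 2"
  have n2: "n = 2 * r" using assms(1) unfolding r_def by simp
  interpret conc r by unfold_locales (use assms n2 in auto)
  have b: "bij_betw (bb r) (vertsP r) {1..n}" using bb_bij[of r] n2 assms by simp
  have "card (vertsP r) = n" using bij_betw_same_card[OF b] by simp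
  moreover have "BijGroup (vertsP r) \<cong> sym_group n" by (rule bij_iso[OF b])
  ultimately show ?thesis unfolding r_def[symmetric] using sgB string by simp
qed

end
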